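(* $\mathsf{sTC}_{\mathbb{N}^\mathbb{N}} \le_{\mathrm{W}} \mathsf{FindHS}_{\boldsymbol{\Sigma}^0_1}$ and hence $\chi_{\Pi^1_1}<_{\mathrm{W}}\mathsf{FindHS}_{\boldsymbol{\Sigma}^0_1}$.
   Context: Weihrauch reducibility: $f\le_{\mathrm{W}} g$ iff there are computable $\Phi,\Psi$ on Baire space such that for every realizer $G$ of $g$, $p\mapsto\Psi(\langle p,G\Phi(p)\rangle)$ realizes $f$; $<_{\mathrm{W}}$ is strict reducibility. The Ramsey space $[\mathbb{N}]^\mathbb{N}$ is the set of strictly increasing functions $\mathbb{N}\to\mathbb{N}$ with Baire-space topology; $fg=f\circ g$. For $P\subseteq[\mathbb{N}]^\mathbb{N}$, $f$ is homogeneous for $P$ if either $fg\in P$ for all $g\in[\mathbb{N}]^\mathbb{N}$ or $fg\notin P$ for all $g$; $\mathrm{HS}(P)$ is the set of homogeneous solutions. Open sets of $[\mathbb{N}]^\mathbb{N}$ are named by enumerations of sets of finite strictly increasing strings whose cones have union the set. $\mathsf{FindHS}_{\boldsymbol{\Sigma}^0_1}$: input an open $P$ with $\mathrm{HS}(P)\cap P\ne\emptyset$, output any element of $\mathrm{HS}(P)\cap P$. $\mathsf{sTC}_{\mathbb{N}^\mathbb{N}}$: given a name (a tree on $\mathbb{N}$) of a closed $A\subseteq\mathbb{N}^\mathbb{N}$, output $(b,x)\in\{0,1\}\times\mathbb{N}^\mathbb{N}$ with ($b=0\Rightarrow A=\emptyset$) and ($b=1\Rightarrow x\in A$). $\chi_{\Pi^1_1}:\mathbb{N}^\mathbb{N}\to\{0,1\}$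 is the characteristic function of a $\Pi^1_1$-complete set (equivalently, decide whether a given tree on $\mathbb{N}$ is well-founded). *)

theory Defs
  imports Main "HOL-Library.Nat_Bijection"
begin

datatype recf = RZ | RSuc | RProj nat | RComp recf "recf list" | RPrim recf recf | RMn recf

inductive reval :: "recf \<Rightarrow> nat list \<Rightarrow> nat \<Rightarrow> bool" where
  rz: "reval RZ xs 0"
| rsuc: "reval RSuc (x # xs) (Suc x)"
| rproj: "i < length xs \<Longrightarrow> reval (RProj i) xs (xs ! i)"
| rcomp: "list_all2 (\<lambda>g y. reval g xs y) gs ys \<Longrightarrow> reval f ys z \<Longrightarrow> reval (RComp f gs) xs z"
| rprim0: "reval f xs y \<Longrightarrow> reval (RPrim f g) (0 # xs) y"
| rprimS: "reval (RPrim f g) (n # xs) y \<Longrightarrow> reval g (y # n # xs) z \<Longrightarrow> reval (RPrim f g) (Suc n # xs) z"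
| rmn: "reval f (n # xs) 0 \<Longrightarrow> (\<forall>m<n. \<exists>y. y > 0 \<and> reval f (m # xs) y) \<Longrightarrow> reval (RMn f) xs n"

definition computable_nat :: "(nat \<Rightarrow> nat) \<Rightarrow> bool" where
  "computable_nat h \<longleftrightarrow> (\<exists>c. \<forall>n. reval c [n] (h n))"

type_synonym baire = "nat \<Rightarrow> nat"

definition prefix_code :: "baire \<Rightarrow> nat \<Rightarrow> nat" where
  "prefix_code p k = list_encode (map p [0..<k])"

definition assoc_out :: "(nat \<Rightarrow> nat) \<Rightarrow> baire \<Rightarrow> nat \<Rightarrow> nat \<Rightarrow> nat" where
  "assoc_out \<alpha> p n k = \<alpha> (prod_encode (n, prefix_code p k))"

text \<open>The partial functional on Baire space with associate alpha maps p to q: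
  q n = alpha(<n, p|k>) - 1 for the least k with alpha(<n, p|k>) > 0.\<close>
definition assoc_val :: "(nat \<Rightarrow> nat) \<Rightarrow> baire \<Rightarrow> baire \<Rightarrow> bool" where
  "assoc_val \<alpha> p q \<longleftrightarrow> (\<forall>n. \<exists>k. assoc_out \<alpha> p n k > 0 \<and> (\<forall>j<k. assoc_out \<alpha> p n j = 0)
                              \<and> q n = assoc_out \<alpha> p n k - 1)"

definition bpair :: "baire \<Rightarrow> baire \<Rightarrow> baire" where
  "bpair p q = (\<lambda>n. if even n then p (n div 2) else q (n div 2))"

text \<open>A problem is given by its set of names of instances and, for each instance name,
  the predicate describing names of admissible solutions.\<close>
record problem =
  pdom :: "baire set"
  psol :: "baire \<Rightarrow> baire \<Rightarrow> bool"

definition realizes :: "(baire \<Rightarrow> baire) \<Rightarrow> problem \<Rightarrow> bool" where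
  "realizes G f \<longleftrightarrow> (\<forall>p\<in>pdom f. psol f p (G p))"

text \<open>Realizers are represented as total
  HOL functions; their values outside the domain are irrelevant.\<close>
definition weihrauch_le :: "problem \<Rightarrow> problem \<Rightarrow> bool" (infix "\<le>\<^sub>W" 50) where
  "f \<le>\<^sub>W g \<longleftrightarrow> (\<exists>\<alpha> \<beta>. computable_nat \<alpha> \<and> computable_nat \<beta> \<and>
     (\<forall>G. realizes G g \<longrightarrow>
        (\<forall>p\<in>pdom f. \<exists>q. assoc_val \<alpha> p q \<and> q \<in> pdom g \<and>
            (\<exists>r. assoc_val \<beta> (bpair p (G q)) r \<and> psol f p r))))"

definition weihrauch_less :: "problem \<Rightarrow> problem \<Rightarrow> bool" (infix "<\<^sub>W" 50) where
  "f <\<^sub>W g \<longleftrightarrow> f \<le>\<^sub>W g \<and> \<not> g \<le>\<^sub>W f"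

definition ramsey :: "baire set" where
  "ramsey = {f. strict_mono f}"

definition homogeneous :: "baire set \<Rightarrow> baire \<Rightarrow> bool" where
  "homogeneous P f \<longleftrightarrow> f \<in> ramsey \<and>
     ((\<forall>g\<in>ramsey. f \<circ> g \<in> P) \<or> (\<forall>g\<in>ramsey. f \<circ> g \<notin> P))"

definition HS :: "baire set \<Rightarrow> baire set" where
  "HS P = {f. homogeneous P f}"

text \<open>A name p enumerates a set of finite strings: p n = 0 lists nothing, p n = c + 1 lists the
  string with code c (list_encode).  The named open set is the union of the cones
  (within the Ramsey space) of the listed strings; cones of non-increasing strings are empty.\<close>
definition listed_strings :: "baire \<Rightarrow> nat list set" where
  "listed_strings p = {s. \<exists>n. p n = Suc (list_encode s)}"

definition cone :: "nat list \<Rightarrow> baire set" where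
  "cone s = {f \<in> ramsey. map f [0..<length s] = s}"

definition open_named :: "baire \<Rightarrow> baire set" where
  "open_named p = (\<Union>s\<in>listed_strings p. cone s)"

definition FindHS_Sigma01 :: problem where
  "FindHS_Sigma01 = \<lparr> pdom = {p. HS (open_named p) \<inter> open_named p \<noteq> {}},
                      psol = (\<lambda>p r. r \<in> HS (open_named p) \<inter> open_named p) \<rparr>"

definition tree_of :: "baire \<Rightarrow> nat list set" where
  "tree_of p = {s. p (list_encode s) = 1}"

definition is_tree_name :: "baire \<Rightarrow> bool" where
  "is_tree_name p \<longleftrightarrow> (\<forall>c. p c \<le> 1) \<and>
     (\<forall>s t. s @ t \<in> tree_of p \<longrightarrow> s \<in> tree_of p)"

definition body :: "nat list set \<Rightarrow> baire set" where
  "body T = {x. \<forall>n. map x [0..<n] \<in> T}"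

text \<open>Output (b,x) in {0,1} x N^N is named by r with b = r 0 and x = (n |-> r (n+1)).\<close>
definition sTC_Baire :: problem where
  "sTC_Baire = \<lparr> pdom = {p. is_tree_name p},
                 psol = (\<lambda>p r. r 0 \<le> 1 \<and> (r 0 = 0 \<longrightarrow> body (tree_of p) = {})
                                \<and> (r 0 = 1 \<longrightarrow> (\<lambda>n. r (Suc n)) \<in> body (tree_of p))) \<rparr>"

definition WF_trees :: "baire set" where
  "WF_trees = {p. is_tree_name p \<and> body (tree_of p) = {}}"

text \<open>chi : N^N -> {0,1}, output b named by any r with r 0 = b.\<close>
definition chi_Pi11 :: problem where
  "chi_Pi11 = \<lparr> pdom = UNIV,
                psol = (\<lambda>p r. r 0 = (if p \<in> WF_trees then 1 else 0)) \<rparr>"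

end

theory Submission
  imports Defs
begin

definition pr :: "nat \<Rightarrow> (nat list \<Rightarrow> nat) \<Rightarrow> bool" where
  "pr k f \<longleftrightarrow> (\<exists>c. \<forall>xs. length xs = k \<longrightarrow> reval c xs (f xs))"

lemma pr_cong: "pr k f \<Longrightarrow> (\<And>xs. length xs = k \<Longrightarrow> f xs = g xs) \<Longrightarrow> pr k g"
  unfolding pr_def by metis

lemma pr_zero: "pr k (\<lambda>_. 0)"
  unfolding pr_def by (auto intro: reval.rz)

lemma pr_proj: "i < k \<Longrightarrow> pr k (\<lambda>xs. xs ! i)"
  unfolding pr_def by (auto intro: reval.rproj)

lemma pr_comp_list:
  assumes "\<forall>g\<in>set gs. pr k g"
  shows "\<exists>cs. \<forall>xs. length xs = k \<longrightarrow> list_all2 (\<lambda>c y. reval c xs y) cs (map (\<lambda>g. g xs) gs)"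
  using assms
proof (induction gs)
  case Nil
  then show ?case by auto
next
  case (Cons g gs)
  then obtain cs where cs: "\<forall>xs. length xs = k \<longrightarrow> list_all2 (\<lambda>c y. reval c xs y) cs (map (\<lambda>g. g xs) gs)" by auto
  from Cons.prems obtain c where c: "\<forall>xs. length xs = k \<longrightarrow> reval c xs (g xs)" unfolding pr_def by auto
  show ?case using cs c by (intro exI[of _ "c # cs"]) auto
qed

lemma pr_comp:
  assumes "pr (length gs) f" "\<forall>g\<in>set gs. pr k g"
  shows "pr k (\<lambda>xs. f (map (\<lambda>g. g xs) gs))"
proof -
  obtain cs where cs: "\<forall>xs. length xs = k \<longrightarrow> list_all2 (\<lambda>c y. reval c xs y) cs (map (\<lambda>g. g xs) gs)"
    using pr_comp_list[OF assms(2)] by blast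
  obtain c where c: "\<forall>ys. length ys = length gs \<longrightarrow> reval c ys (f ys)" using assms(1) unfolding pr_def by blast
  show ?thesis unfolding pr_def
    by (rule exI[of _ "RComp c cs"]) (auto intro!: reval.rcomp cs[rule_format] c[rule_format])
qed

lemma pr_suc: "pr k f \<Longrightarrow> pr k (\<lambda>xs. Suc (f xs))"
proof -
  assume "pr k f"
  then obtain c where c: "\<forall>xs. length xs = k \<longrightarrow> reval c xs (f xs)" unfolding pr_def by blast
  have "reval (RComp RSuc [c]) xs (Suc (f xs))" if "length xs = k" for xs
    using c that by (auto intro!: reval.rcomp reval.rsuc)
  then show ?thesis unfolding pr_def by blast
qed

lemma pr_const: "pr k (\<lambda>_. n)"
  by (induction n) (auto intro: pr_zero pr_suc[of k "\<lambda>_. _"])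

fun precf :: "(nat list \<Rightarrow> nat) \<Rightarrow> (nat list \<Rightarrow> nat) \<Rightarrow> nat \<Rightarrow> nat list \<Rightarrow> nat" where
  "precf f g 0 xs = f xs"
| "precf f g (Suc n) xs = g (precf f g n xs # n # xs)"

lemma pr_prim:
  assumes "pr k f" "pr (Suc (Suc k)) g"
  shows "pr (Suc k) (\<lambda>xs. precf f g (hd xs) (tl xs))"
proof -
  obtain cf where cf: "\<forall>xs. length xs = k \<longrightarrow> reval cf xs (f xs)" using assms(1) unfolding pr_def by blast
  obtain cg where cg: "\<forall>xs. length xs = Suc (Suc k) \<longrightarrow> reval cg xs (g xs)" using assms(2) unfolding pr_def by blast
  have "reval (RPrim cf cg) (n # xs) (precf f g n xs)" if "length xs = k" for n xs
  proof (induction n)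
    case 0 then show ?case using cf that by (auto intro: reval.rprim0)
  next
    case (Suc n)
    have "reval cg (precf f g n xs # n # xs) (g (precf f g n xs # n # xs))"
      using cg that by simp
    then show ?case using Suc.IH by (auto intro: reval.rprimS)
  qed
  then show ?thesis unfolding pr_def
    by (intro exI[of _ "RPrim cf cg"]) (metis length_Suc_conv list.sel(1,3))
qed

lemma pr_comp1: "pr 1 f \<Longrightarrow> pr k a \<Longrightarrow> pr k (\<lambda>xs. f [a xs])"
  using pr_comp[of "[a]" f k] by simp
lemma pr_comp2: "pr 2 f \<Longrightarrow> pr k a \<Longrightarrow> pr k b \<Longrightarrow> pr k (\<lambda>xs. f [a xs, b xs])"
  using pr_comp[of "[a,b]" f k] by (simp add: numeral_2_eq_2)
lemma pr_comp3: "pr 3 f \<Longrightarrow> pr k a \<Longrightarrow> pr k b \<Longrightarrow> pr k c \<Longrightarrow> pr k (\<lambda>xs. f [a xs, b xs, c xs])"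
  using pr_comp[of "[a,b,c]" f k] by (simp add: numeral_3_eq_3)

lemma pr_add: "pr k a \<Longrightarrow> pr k b \<Longrightarrow> pr k (\<lambda>xs. a xs + b xs)"
proof -
  have A: "pr 2 (\<lambda>xs. precf (\<lambda>ys. ys ! 0) (\<lambda>ys. Suc (ys ! 0)) (hd xs) (tl xs))"
    using pr_prim[of 1 "\<lambda>ys. ys ! 0" "\<lambda>ys. Suc (ys ! 0)"] pr_proj[of 0] pr_suc[OF pr_proj[of 0]]
    by (simp add: numeral_2_eq_2)
  have B: "precf (\<lambda>ys. ys ! 0) (\<lambda>ys. Suc (ys ! 0)) n ys = n + ys ! 0" for n ys
    by (induction n) auto
  have "pr 2 (\<lambda>xs. xs ! 0 + xs ! 1)"
    by (rule pr_cong[OF A]) (auto simp: B[simplified] numeral_2_eq_2 length_Suc_conv)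
  then show "pr k a \<Longrightarrow> pr k b \<Longrightarrow> pr k (\<lambda>xs. a xs + b xs)"
    using pr_comp2 by fastforce
qed

lemma pr_pred: "pr k a \<Longrightarrow> pr k (\<lambda>xs. a xs - 1)"
proof -
  have A: "pr 1 (\<lambda>xs. precf (\<lambda>ys. 0) (\<lambda>ys. ys ! 1) (hd xs) (tl xs))"
    using pr_prim[of 0 "\<lambda>ys. 0" "\<lambda>ys. ys ! 1"] pr_zero pr_proj[of 1 2]
    by (simp add: numeral_2_eq_2)
  have B: "precf (\<lambda>ys. 0) (\<lambda>ys. ys ! 1) n ys = n - 1" for n ys
    by (cases n) auto
  have "pr 1 (\<lambda>xs. xs ! 0 - 1)"
    by (rule pr_cong[OF A]) (auto simp: B[simplified] length_Suc_conv)
  then show "pr k a \<Longrightarrow> pr k (\<lambda>xs. a xs - 1)"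
    using pr_comp1 by fastforce
qed

lemma pr_sub: "pr k a \<Longrightarrow> pr k b \<Longrightarrow> pr k (\<lambda>xs. a xs - b xs)"
proof -
  have A: "pr 2 (\<lambda>xs. precf (\<lambda>ys. ys ! 0) (\<lambda>ys. ys ! 0 - 1) (hd xs) (tl xs))"
    using pr_prim[of 1 "\<lambda>ys. ys ! 0" "\<lambda>ys. ys ! 0 - 1"] pr_proj[of 0] pr_pred[OF pr_proj[of 0]]
    by (simp add: numeral_2_eq_2)
  have B: "precf (\<lambda>ys. ys ! 0) (\<lambda>ys. ys ! 0 - 1) n ys = ys ! 0 - n" for n ys
    by (induction n) auto
  have "pr 2 (\<lambda>xs. xs ! 1 - xs ! 0)"
    by (rule pr_cong[OF A]) (auto simp: B[simplified] numeral_2_eq_2 length_Suc_conv)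
  then show "pr k a \<Longrightarrow> pr k b \<Longrightarrow> pr k (\<lambda>xs. a xs - b xs)"
    using pr_comp2[of "\<lambda>xs. xs ! 1 - xs ! 0" k b a] by simp
qed

lemma pr_mul: "pr k a \<Longrightarrow> pr k b \<Longrightarrow> pr k (\<lambda>xs. a xs * b xs)"
proof -
  have A: "pr 2 (\<lambda>xs. precf (\<lambda>ys. 0) (\<lambda>ys. ys ! 0 + ys ! 2) (hd xs) (tl xs))"
    using pr_prim[of 1 "\<lambda>ys. 0" "\<lambda>ys. ys ! 0 + ys ! 2"] pr_zero pr_add[OF pr_proj[of 0] pr_proj[of 2]]
    by (simp add: numeral_2_eq_2 numeral_3_eq_3)
  have B: "precf (\<lambda>ys. 0) (\<lambda>ys. ys ! 0 + ys ! 2) n ys = n * ys ! 0" for n ys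
    by (induction n) auto
  have "pr 2 (\<lambda>xs. xs ! 0 * xs ! 1)"
    by (rule pr_cong[OF A]) (auto simp: B[unfolded numeral_2_eq_2] numeral_2_eq_2 length_Suc_conv)
  then show "pr k a \<Longrightarrow> pr k b \<Longrightarrow> pr k (\<lambda>xs. a xs * b xs)"
    using pr_comp2 by fastforce
qed

lemma pr_if: "pr k c \<Longrightarrow> pr k a \<Longrightarrow> pr k b \<Longrightarrow> pr k (\<lambda>xs. if c xs \<noteq> 0 then a xs else b xs)"
proof -
  assume c: "pr k c" and a: "pr k a" and b: "pr k b"
  have "pr k (\<lambda>xs. a xs * (1 - (1 - c xs)) + b xs * (1 - c xs))"
    by (intro pr_add pr_mul pr_sub a b c pr_const)
  then show ?thesis by (rule pr_cong) auto
qed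

lemma pr_lt: "pr k a \<Longrightarrow> pr k b \<Longrightarrow> pr k (\<lambda>xs. if a xs < b xs then 1 else 0)"
proof -
  assume a: "pr k a" and b: "pr k b"
  have "pr k (\<lambda>xs. 1 - (1 - (b xs - a xs)))"
    by (intro pr_sub a b pr_const)
  then show ?thesis by (rule pr_cong) auto
qed

lemma pr_sel:
  assumes "pr (length is) f" "\<forall>i\<in>set is. i < k"
  shows "pr k (\<lambda>xs. f (map (\<lambda>i. xs ! i) is))"
proof -
  have "pr k (\<lambda>xs. f (map (\<lambda>g. g xs) (map (\<lambda>i xs. xs ! i) is)))"
    using assms by (intro pr_comp) (auto intro: pr_proj)
  then show ?thesis by (simp add: comp_def)
qed

lemma pr_let:
  assumes "pr (Suc k) f" "pr k b"
  shows "pr k (\<lambda>xs. f (b xs # xs))"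
proof -
  have "pr k (\<lambda>xs. f (map (\<lambda>g. g xs) (b # map (\<lambda>i xs. xs ! i) [0..<k])))"
    using assms by (intro pr_comp) (auto intro: pr_proj)
  then show ?thesis by (rule pr_cong) (simp add: comp_def, metis map_nth)
qed

lemma pr_ifb: "pr k (\<lambda>xs. if P xs then 1 else 0) \<Longrightarrow> pr k a \<Longrightarrow> pr k b \<Longrightarrow>
   pr k (\<lambda>xs. if P xs then a xs else b xs)"
  by (rule pr_cong[OF pr_if[of k "\<lambda>xs. if P xs then 1 else 0" a b]]) auto

definition bmu :: "nat \<Rightarrow> (nat \<Rightarrow> bool) \<Rightarrow> nat" where
  "bmu n Q = (if \<exists>c<n. Q c then (LEAST c. Q c) else n)"

lemma bmu_0[simp]: "bmu 0 Q = 0" by (simp add: bmu_def)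

lemma bmu_ex: "\<exists>c<n. Q c \<Longrightarrow> bmu n Q = (LEAST c. Q c) \<and> (LEAST c. Q c) < n \<and> Q (LEAST c. Q c)"
proof -
  assume "\<exists>c<n. Q c"
  then obtain c where c: "c < n" "Q c" by blast
  have "(LEAST c. Q c) \<le> c" using c(2) by (rule Least_le)
  moreover have "Q (LEAST c. Q c)" using c(2) by (rule LeastI)
  ultimately show ?thesis using c \<open>\<exists>c<n. Q c\<close> unfolding bmu_def by simp
qed

lemma bmu_nex: "\<not> (\<exists>c<n. Q c) \<Longrightarrow> bmu n Q = n"
  unfolding bmu_def by auto

lemma bmu_eq_iff: "bmu n Q < n \<longleftrightarrow> (\<exists>c<n. Q c)"
  by (metis bmu_ex bmu_nex less_irrefl)

lemma bmu_prop: "bmu n Q < n \<Longrightarrow> Q (bmu n Q)"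
  by (metis bmu_ex bmu_eq_iff)

lemma bmu_least: "c < bmu n Q \<Longrightarrow> \<not> Q c"
proof
  assume a: "c < bmu n Q" "Q c"
  show False
  proof (cases "\<exists>c<n. Q c")
    case True
    then have "bmu n Q = (LEAST c. Q c)" using bmu_ex by blast
    then show False using a not_less_Least by metis
  next
    case False
    then show False using a bmu_nex by metis
  qed
qed

lemma bmu_le: "bmu n Q \<le> n"
  by (metis bmu_eq_iff bmu_nex less_imp_le order_refl)

lemma bmu_Suc: "bmu (Suc n) Q = (if bmu n Q < n then bmu n Q else if Q n then n else Suc n)"
proof (cases "\<exists>c<n. Q c")
  case True
  then have "\<exists>c<Suc n. Q c" using less_SucI by blast
  then show ?thesis using bmu_ex[OF True] bmu_ex[of "Suc n" Q] by simp
next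
  case False
  then have bn: "bmu n Q = n" by (rule bmu_nex)
  show ?thesis
  proof (cases "Q n")
    case True
    then have "\<exists>c<Suc n. Q c" by auto
    with bmu_ex[OF this] have "bmu (Suc n) Q = (LEAST c. Q c)" by simp
    moreover have "(LEAST c. Q c) = n"
      using False True by (metis Least_le bmu_ex \<open>\<exists>c<Suc n. Q c\<close> less_Suc_eq le_neq_implies_less)
    ultimately show ?thesis using bn True by simp
  next
    case F2: False
    then have "\<not> (\<exists>c<Suc n. Q c)" using False less_Suc_eq by auto
    then show ?thesis using bn F2 bmu_nex by simp
  qed
qed

datatype ex = V nat | K nat | Add ex ex | Sub ex ex | Mul ex ex | Lt ex ex | If ex ex ex
  | Mu ex ex | Rec ex ex ex | Let ex ex

primrec eval :: "ex \<Rightarrow> nat list \<Rightarrow> nat" where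
  "eval (V i) xs = xs ! i"
| "eval (K n) xs = n"
| "eval (Add a b) xs = eval a xs + eval b xs"
| "eval (Sub a b) xs = eval a xs - eval b xs"
| "eval (Mul a b) xs = eval a xs * eval b xs"
| "eval (Lt a b) xs = (if eval a xs < eval b xs then 1 else 0)"
| "eval (If c a b) xs = (if eval c xs \<noteq> 0 then eval a xs else eval b xs)"
| "eval (Mu b p) xs = bmu (eval b xs) (\<lambda>c. eval p (c # xs) \<noteq> 0)"
| "eval (Rec n e0 e1) xs = precf (eval e0) (eval e1) (eval n xs) xs"
| "eval (Let e1 e2) xs = eval e2 (eval e1 xs # xs)"

primrec wfe :: "ex \<Rightarrow> nat \<Rightarrow> bool" where
  "wfe (V i) k = (i < k)"
| "wfe (K n) k = True"
| "wfe (Add a b) k = (wfe a k \<and> wfe b k)"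
| "wfe (Sub a b) k = (wfe a k \<and> wfe b k)"
| "wfe (Mul a b) k = (wfe a k \<and> wfe b k)"
| "wfe (Lt a b) k = (wfe a k \<and> wfe b k)"
| "wfe (If c a b) k = (wfe c k \<and> wfe a k \<and> wfe b k)"
| "wfe (Mu b p) k = (wfe b k \<and> wfe p (Suc k))"
| "wfe (Rec n e0 e1) k = (wfe n k \<and> wfe e0 k \<and> wfe e1 (Suc (Suc k)))"
| "wfe (Let e1 e2) k = (wfe e1 k \<and> wfe e2 (Suc k))"

lemma pr_bmu:
  assumes p: "pr (Suc k) p" and b: "pr k b"
  shows "pr k (\<lambda>xs. bmu (b xs) (\<lambda>c. p (c # xs) \<noteq> 0))"
proof -
  define G where "G = (\<lambda>ys::nat list. if ys ! 0 < ys ! 1 then ys ! 0 else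
                  if p (map (\<lambda>i. ys ! i) [1..<Suc (Suc k)]) \<noteq> 0 then ys ! 1 else Suc (ys ! 1))"
  have pp: "pr (Suc (Suc k)) (\<lambda>ys. p (map (\<lambda>i. ys ! i) [1..<Suc (Suc k)]))"
    using pr_sel[of "[1..<Suc (Suc k)]" p "Suc (Suc k)"] p by (simp del: upt_Suc)
  have G: "pr (Suc (Suc k)) G" unfolding G_def
    apply (rule pr_ifb)
      apply (rule pr_lt; rule pr_proj; simp)
     apply (rule pr_proj; simp)
    apply (rule pr_if[OF pp])
     apply (rule pr_proj; simp)
    apply (rule pr_suc, rule pr_proj; simp)
    done
  have H: "pr (Suc k) (\<lambda>ys. precf (\<lambda>_. 0) G (hd ys) (tl ys))"
    by (rule pr_prim[OF pr_zero G])
  have eq: "length xs = k \<Longrightarrow> precf (\<lambda>_. 0) G n xs = bmu n (\<lambda>c. p (c # xs) \<noteq> 0)" for n xs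
  proof (induction n)
    case 0 then show ?case by simp
  next
    case (Suc n)
    have m: "map ((!) (a # n # xs)) [Suc 0..<Suc (Suc k)] = n # xs" for a
    proof -
      have "[Suc 0..<Suc (Suc k)] = map Suc [0..<Suc k]" by (simp add: map_Suc_upt)
      then have "map (\<lambda>i. (a # n # xs) ! i) [Suc 0..<Suc (Suc k)] = map (\<lambda>i. (n # xs) ! i) [0..<length (n # xs)]"
        using Suc.prems by (simp del: upt_Suc)
      then show ?thesis by (metis map_nth)
    qed
    show ?case using Suc by (simp add: G_def m bmu_Suc del: upt_Suc)
  qed
  show ?thesis using pr_let[OF H b] by (rule pr_cong) (simp add: eq)
qed

lemma pr_eval: "wfe e k \<Longrightarrow> pr k (eval e)"
proof (induction e arbitrary: k)
  case (V i) then show ?case by (simp add: pr_proj)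
next
  case (K n) then show ?case by (simp add: pr_const)
next
  case (Add a b) then show ?case by (simp add: pr_add)
next
  case (Sub a b) then show ?case by (simp add: pr_sub)
next
  case (Mul a b) then show ?case by (simp add: pr_mul)
next
  case (Lt a b) then show ?case by (simp add: pr_lt)
next
  case (If c a b) then show ?case using pr_if[of k "eval c" "eval a" "eval b"] by simp
next
  case (Mu b p) then show ?case using pr_bmu[of k "eval p" "eval b"] by simp
next
  case (Rec n e0 e1)
  then have "pr (Suc k) (\<lambda>ys. precf (eval e0) (eval e1) (hd ys) (tl ys))" by (simp add: pr_prim)
  from pr_let[OF this] Rec show ?case by simp
next
  case (Let e1 e2) then show ?case using pr_let[of k "eval e2" "eval e1"] by simp
qed

lemma computable_from_ex: "wfe e 1 \<Longrightarrow> computable_nat (\<lambda>n. eval e [n])"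
proof -
  assume "wfe e 1"
  then obtain c where c: "\<forall>xs. length xs = 1 \<longrightarrow> reval c xs (eval e xs)"
    using pr_eval[of e 1] unfolding pr_def by blast
  then have "\<forall>n. reval c [n] (eval e [n])" by simp
  then show ?thesis unfolding computable_nat_def by blast
qed

definition NotE where "NotE a = If a (K 0) (K 1)"
definition AndE where "AndE a b = If a (If b (K 1) (K 0)) (K 0)"
definition OrE where "OrE a b = If a (K 1) (If b (K 1) (K 0))"
definition EqE where "EqE a b = NotE (Add (Sub a b) (Sub b a))"
definition LeE where "LeE a b = NotE (Lt b a)"
definition ExE where "ExE b p = Lt (Mu b p) b"
definition AllE where "AllE b p = NotE (ExE b (NotE p))"

lemma eval_NotE[simp]: "eval (NotE a) xs = (if eval a xs = 0 then 1 else 0)" by (simp add: NotE_def)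
lemma eval_AndE[simp]: "eval (AndE a b) xs = (if eval a xs \<noteq> 0 \<and> eval b xs \<noteq> 0 then 1 else 0)" by (simp add: AndE_def)
lemma eval_OrE[simp]: "eval (OrE a b) xs = (if eval a xs \<noteq> 0 \<or> eval b xs \<noteq> 0 then 1 else 0)" by (simp add: OrE_def)
lemma eval_EqE[simp]: "eval (EqE a b) xs = (if eval a xs = eval b xs then 1 else 0)" by (simp add: EqE_def)
lemma eval_LeE[simp]: "eval (LeE a b) xs = (if eval a xs \<le> eval b xs then 1 else 0)" by (simp add: LeE_def)
lemma eval_ExE[simp]: "eval (ExE b p) xs = (if \<exists>c<eval b xs. eval p (c # xs) \<noteq> 0 then 1 else 0)"
  by (simp add: ExE_def bmu_eq_iff)
lemma eval_AllE[simp]: "eval (AllE b p) xs = (if \<forall>c<eval b xs. eval p (c # xs) \<noteq> 0 then 1 else 0)"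
  by (auto simp add: AllE_def)

lemma wfe_NotE[simp]: "wfe (NotE a) k = wfe a k" by (auto simp add: NotE_def)
lemma wfe_AndE[simp]: "wfe (AndE a b) k = (wfe a k \<and> wfe b k)" by (auto simp add: AndE_def)
lemma wfe_OrE[simp]: "wfe (OrE a b) k = (wfe a k \<and> wfe b k)" by (auto simp add: OrE_def)
lemma wfe_EqE[simp]: "wfe (EqE a b) k = (wfe a k \<and> wfe b k)" by (auto simp add: EqE_def)
lemma wfe_LeE[simp]: "wfe (LeE a b) k = (wfe a k \<and> wfe b k)" by (auto simp add: LeE_def)
lemma wfe_ExE[simp]: "wfe (ExE b p) k = (wfe b k \<and> wfe p (Suc k))" by (auto simp add: ExE_def)
lemma wfe_AllE[simp]: "wfe (AllE b p) k = (wfe b k \<and> wfe p (Suc k))" by (auto simp add: AllE_def)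

lemma bmu_unique: "c0 < n \<Longrightarrow> Q c0 \<Longrightarrow> (\<And>c. Q c \<Longrightarrow> c = c0) \<Longrightarrow> bmu n Q = c0"
  by (metis bmu_eq_iff bmu_prop)

definition Div2E where "Div2E a = Let a (Mu (Add (V 0) (K 1)) (AndE (Lt (V 1) (Mul (K 2) (Add (V 0) (K 1)))) (LeE (Mul (K 2) (V 0)) (V 1))))"

lemma eval_Div2E[simp]: "eval (Div2E a) xs = eval a xs div 2"
  unfolding Div2E_def by (simp, rule bmu_unique) auto

lemma wfe_Div2E[simp]: "wfe (Div2E a) k = wfe a k" by (simp add: Div2E_def)

definition PEE where "PEE a b = Add (Div2E (Mul (Add a b) (Add (Add a b) (K 1)))) a"

lemma eval_PEE[simp]: "eval (PEE a b) xs = prod_encode (eval a xs, eval b xs)"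
  by (simp add: PEE_def prod_encode_def triangle_def)
lemma wfe_PEE[simp]: "wfe (PEE a b) k = (wfe a k \<and> wfe b k)" by (auto simp add: PEE_def)

definition fstbody where
  "fstbody = Mu (Add (V 0) (K 1)) (ExE (Add (V 1) (K 1)) (EqE (PEE (V 1) (V 0)) (V 2)))"
definition FstE where "FstE a = Let a fstbody"

lemma pd_le: "fst (prod_decode m) \<le> m" "snd (prod_decode m) \<le> m"
  by (metis le_prod_encode_1 prod.collapse prod_decode_inverse)
     (metis le_prod_encode_2 prod.collapse prod_decode_inverse)

lemma eval_FstE[simp]: "eval (FstE a) xs = fst (prod_decode (eval a xs))"
proof -
  let ?m = "eval a xs"
  have "bmu (Suc ?m) (\<lambda>c. \<exists>b<Suc ?m. prod_encode (c, b) = ?m) = fst (prod_decode ?m)"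
  proof (rule bmu_unique)
    show "fst (prod_decode ?m) < Suc ?m" using pd_le by (simp add: le_imp_less_Suc)
    show "\<exists>b<Suc ?m. prod_encode (fst (prod_decode ?m), b) = ?m"
      using pd_le by (intro exI[of _ "snd (prod_decode ?m)"]) (simp add: le_imp_less_Suc)
    show "c = fst (prod_decode ?m)" if "\<exists>b<Suc ?m. prod_encode (c, b) = ?m" for c
      using that by (metis fst_conv prod_encode_inverse)
  qed
  moreover have "eval (FstE a) xs = bmu (?m + 1) (\<lambda>c. eval (ExE (Add (V 1) (K 1)) (EqE (PEE (V 1) (V 0)) (V 2))) (c # ?m # xs) \<noteq> 0)"
    by (simp only: FstE_def fstbody_def eval.simps nth_Cons_0)
  moreover have "(\<lambda>c. eval (ExE (Add (V 1) (K 1)) (EqE (PEE (V 1) (V 0)) (V 2))) (c # ?m # xs) \<noteq> 0) = (\<lambda>c. \<exists>b<Suc ?m. prod_encode (c, b) = ?m)"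
    by auto
  ultimately show ?thesis by simp
qed
lemma wfe_FstE[simp]: "wfe (FstE a) k = wfe a k" by (auto simp add: FstE_def fstbody_def)

definition sndbody where
  "sndbody = Mu (Add (V 0) (K 1)) (EqE (PEE (FstE (V 1)) (V 0)) (V 1))"
definition SndE where "SndE a = Let a sndbody"

lemma eval_SndE[simp]: "eval (SndE a) xs = snd (prod_decode (eval a xs))"
proof -
  let ?m = "eval a xs"
  have "bmu (Suc ?m) (\<lambda>c. prod_encode (fst (prod_decode ?m), c) = ?m) = snd (prod_decode ?m)"
  proof (rule bmu_unique)
    show "snd (prod_decode ?m) < Suc ?m" using pd_le by (simp add: le_imp_less_Suc)
    show "prod_encode (fst (prod_decode ?m), snd (prod_decode ?m)) = ?m" by simp
    show "c = snd (prod_decode ?m)" if "prod_encode (fst (prod_decode ?m), c) = ?m" for c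
      using that by (metis snd_conv prod_encode_inverse)
  qed
  then show ?thesis by (simp add: SndE_def sndbody_def)
qed
lemma wfe_SndE[simp]: "wfe (SndE a) k = wfe a k" by (auto simp add: SndE_def sndbody_def)

definition tailc :: "nat \<Rightarrow> nat" where
  "tailc c = (if c = 0 then 0 else snd (prod_decode (c - 1)))"
definition lenc :: "nat \<Rightarrow> nat" where "lenc c = length (list_decode c)"
definition nthc :: "nat \<Rightarrow> nat \<Rightarrow> nat" where
  "nthc c i = (if i < lenc c then list_decode c ! i else 0)"

lemma list_decode_Suc: "list_decode (Suc n) = fst (prod_decode n) # list_decode (snd (prod_decode n))"
  by (simp split: prod.split)

declare list_decode.simps(2)[simp del]
declare list_decode_Suc[simp]

lemma list_decode_eq_Nil: "list_decode c = [] \<longleftrightarrow> c = 0"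
  by (cases c) (auto simp: list_decode_Suc)

lemma tailc_dec: "list_decode (tailc c) = tl (list_decode c)"
  by (cases c) (auto simp: tailc_def list_decode_Suc)

lemma iter_tailc: "list_decode ((tailc ^^ t) c) = drop t (list_decode c)"
  by (induction t) (auto simp: tailc_dec drop_Suc tl_drop)

lemma length_le_code: "length l \<le> list_encode l"
  by (induction l) (auto intro: le_trans[OF _ le_prod_encode_2])

lemma hd_code: "c \<noteq> 0 \<Longrightarrow> hd (list_decode c) = fst (prod_decode (c - 1))"
  by (cases c) (auto simp: list_decode_Suc)

definition tailbody where "tailbody = If (V 0) (SndE (Sub (V 0) (K 1))) (K 0)"
definition IterE where "IterE t c = Rec t c tailbody"

lemma precf_iter: "precf f (\<lambda>ys. h (ys ! 0)) n xs = (h ^^ n) (f xs)"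
  by (induction n) auto

lemma eval_IterE[simp]: "eval (IterE t c) xs = (tailc ^^ eval t xs) (eval c xs)"
proof -
  have "eval tailbody = (\<lambda>ys. tailc (ys ! 0))" by (auto simp: tailbody_def tailc_def)
  then show ?thesis by (simp add: IterE_def precf_iter)
qed
lemma wfe_IterE[simp]: "wfe (IterE t c) k = (wfe t k \<and> wfe c k)" by (auto simp add: IterE_def tailbody_def)

definition LenE where "LenE c = Let c (Mu (Add (V 0) (K 1)) (EqE (IterE (V 0) (V 1)) (K 0)))"

lemma iter_zero_iff: "(tailc ^^ t) c = 0 \<longleftrightarrow> lenc c \<le> t"
  by (metis iter_tailc list_decode_eq_Nil drop_eq_Nil lenc_def)

lemma eval_LenE[simp]: "eval (LenE c) xs = lenc (eval c xs)"
proof -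
  let ?c = "eval c xs"
  have "bmu (Suc ?c) (\<lambda>t. (tailc ^^ t) ?c = 0) = lenc ?c"
  proof -
    have l: "lenc ?c < Suc ?c" using length_le_code[of "list_decode ?c"] by (simp add: lenc_def)
    have "bmu (Suc ?c) (\<lambda>t. (tailc ^^ t) ?c = 0) < Suc ?c"
      using l iter_zero_iff bmu_eq_iff by blast
    then have a: "lenc ?c \<le> bmu (Suc ?c) (\<lambda>t. (tailc ^^ t) ?c = 0)"
      using bmu_prop iter_zero_iff by blast
    have "\<not> lenc ?c < bmu (Suc ?c) (\<lambda>t. (tailc ^^ t) ?c = 0)"
      using bmu_least iter_zero_iff by blast
    then show ?thesis using a by simp
  qed
  then show ?thesis by (simp add: LenE_def)
qed
lemma wfe_LenE[simp]: "wfe (LenE c) k = wfe c k" by (auto simp add: LenE_def)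

definition NthE where "NthE c i = If (Lt i (LenE c)) (FstE (Sub (IterE i c) (K 1))) (K 0)"

lemma eval_NthE[simp]: "eval (NthE c i) xs = nthc (eval c xs) (eval i xs)"
proof -
  let ?c = "eval c xs" and ?i = "eval i xs"
  have "?i < lenc ?c \<Longrightarrow> list_decode ?c ! ?i = fst (prod_decode ((tailc ^^ ?i) ?c - 1))"
  proof -
    assume a: "?i < lenc ?c"
    then have ne: "(tailc ^^ ?i) ?c \<noteq> 0" using iter_zero_iff by simp
    have "list_decode ?c ! ?i = hd (drop ?i (list_decode ?c))"
      using a by (simp add: lenc_def hd_drop_conv_nth)
    also have "\<dots> = fst (prod_decode ((tailc ^^ ?i) ?c - 1))"
      using hd_code[OF ne] by (simp add: iter_tailc)
    finally show ?thesis .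
  qed
  then show ?thesis by (simp add: NthE_def nthc_def)
qed
lemma wfe_NthE[simp]: "wfe (NthE c i) k = (wfe c k \<and> wfe i k)" by (auto simp add: NthE_def)

lemma triangle_mono: "a \<le> b \<Longrightarrow> triangle a \<le> triangle b"
  by (induction b) (auto simp: le_Suc_eq)

lemma pe_mono: "a \<le> a' \<Longrightarrow> b \<le> b' \<Longrightarrow> prod_encode (a, b) \<le> prod_encode (a', b')"
  unfolding prod_encode_def using triangle_mono[of "a + b" "a' + b'"] by simp

lemma triangle_strict: "m < n \<Longrightarrow> triangle m < triangle n"
  by (induction n) (auto simp: less_Suc_eq)

lemma map_eq_nth: "map h [0..<length s] = s \<Longrightarrow> i < length s \<Longrightarrow> s ! i = h i"
proof -
  assume a: "map h [0..<length s] = s" "i < length s"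
  then have "s ! i = map h [0..<length s] ! i" by simp
  also have "\<dots> = h i" using a(2) by simp
  finally show ?thesis .
qed

lemma pe_strict2: "b < b' \<Longrightarrow> prod_encode (a, b) < prod_encode (a, b')"
proof -
  assume "b < b'"
  then have "triangle (a + b) < triangle (a + b')"
    using triangle_strict by simp
  then show ?thesis unfolding prod_encode_def by simp
qed

lemma le_snoc: "list_encode l < list_encode (l @ [a])"
  by (induction l) (auto intro: pe_strict2)

lemma le_mono: "length l = length l' \<Longrightarrow> (\<forall>i<length l. l ! i \<le> l' ! i) \<Longrightarrow> list_encode l \<le> list_encode l'"
proof (induction l arbitrary: l')
  case Nil then show ?case by simp
next
  case (Cons a l)
  then obtain b l'' where l': "l' = b # l''" by (cases l') auto
  have "a \<le> b" using Cons.prems l' by force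
  moreover have "list_encode l \<le> list_encode l''"
  proof (rule Cons.IH)
    show "length l = length l''" using Cons.prems l' by simp
    show "\<forall>i<length l. l ! i \<le> l'' ! i"
    proof (intro allI impI)
      fix i assume "i < length l"
      then have "Suc i < length (a # l)" by simp
      then have "(a # l) ! Suc i \<le> l' ! Suc i" using Cons.prems(2) by blast
      then show "l ! i \<le> l'' ! i" using l' by simp
    qed
  qed
  ultimately show ?case using l' by (simp add: pe_mono)
qed

lemma elem_le_code: "i < length l \<Longrightarrow> l ! i \<le> list_encode l"
proof (induction l arbitrary: i)
  case Nil then show ?case by simp
next
  case (Cons a l)
  show ?case
  proof (cases i)
    case 0 then show ?thesis by (simp add: le_SucI le_prod_encode_1)
  next
    case (Suc j) then show ?thesis
      using Cons.IH[of j] Cons.prems le_prod_encode_2[of "list_encode l" a] by simp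
  qed
qed

lemma tl_code_less: "l \<noteq> [] \<Longrightarrow> list_encode (tl l) < list_encode l"
  by (cases l) (auto simp: le_imp_less_Suc le_prod_encode_2)

section \<open>The open set built from a set M of strings\<close>

definition bnd :: "nat list \<Rightarrow> nat list \<Rightarrow> bool" where
  "bnd \<sigma> s \<longleftrightarrow> Suc (length \<sigma>) = length s \<and> (\<forall>i<length \<sigma>. \<sigma> ! i \<le> s ! Suc i)"
definition spre :: "nat list \<Rightarrow> nat list \<Rightarrow> bool" where
  "spre \<sigma> \<tau> \<longleftrightarrow> length \<sigma> < length \<tau> \<and> (\<forall>i<length \<sigma>. \<sigma> ! i = \<tau> ! i)"
definition dc :: "nat \<Rightarrow> nat list" where "dc a = list_decode (a div 2)"
definition evenok :: "nat list set \<Rightarrow> nat list \<Rightarrow> bool" where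
  "evenok M s \<longleftrightarrow> s \<noteq> [] \<and> even (s ! 0) \<and> \<not> (\<exists>\<sigma>. bnd \<sigma> s \<and> \<sigma> \<in> M)"
definition oddok :: "nat list set \<Rightarrow> nat list \<Rightarrow> bool" where
  "oddok M s \<longleftrightarrow> length s = 2 \<and> odd (s ! 0) \<and> odd (s ! 1) \<and> dc (s ! 0) \<in> M \<and> dc (s ! 1) \<in> M
     \<and> spre (dc (s ! 0)) (dc (s ! 1))"
definition listedM :: "nat list set \<Rightarrow> nat list \<Rightarrow> bool" where
  "listedM M s \<longleftrightarrow> evenok M s \<or> oddok M s"
definition PM :: "nat list set \<Rightarrow> baire set" where
  "PM M = (\<Union>s\<in>{s. listedM M s}. cone s)"
definition pclosed :: "nat list set \<Rightarrow> bool" where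
  "pclosed M \<longleftrightarrow> (\<forall>s t. s @ t \<in> M \<longrightarrow> s \<in> M)"

lemma mem_PM: "h \<in> PM M \<longleftrightarrow> h \<in> ramsey \<and> (\<exists>s. listedM M s \<and> map h [0..<length s] = s)"
  unfolding PM_def cone_def by auto

lemma ramsey_comp: "f \<in> ramsey \<Longrightarrow> g \<in> ramsey \<Longrightarrow> f \<circ> g \<in> ramsey"
  unfolding ramsey_def strict_mono_def by auto

lemma id_ramsey: "id \<in> ramsey" unfolding ramsey_def by (simp add: strict_mono_def)

lemma sol_all: "f \<in> HS P \<inter> P \<Longrightarrow> g \<in> ramsey \<Longrightarrow> f \<circ> g \<in> P"
proof -
  assume a: "f \<in> HS P \<inter> P" "g \<in> ramsey"
  then have h: "(\<forall>g\<in>ramsey. f \<circ> g \<in> P) \<or> (\<forall>g\<in>ramsey. f \<circ> g \<notin> P)" "f \<in> P"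
    by (auto simp: HS_def homogeneous_def)
  have "f \<circ> id \<in> P" using h(2) by simp
  then have "\<not> (\<forall>g\<in>ramsey. f \<circ> g \<notin> P)" using id_ramsey by blast
  then show ?thesis using h(1) a(2) by blast
qed

lemma sol_intro: "f \<in> ramsey \<Longrightarrow> (\<And>g. g \<in> ramsey \<Longrightarrow> f \<circ> g \<in> P) \<Longrightarrow> f \<in> HS P \<inter> P"
proof -
  assume a: "f \<in> ramsey" "\<And>g. g \<in> ramsey \<Longrightarrow> f \<circ> g \<in> P"
  have "f \<circ> id \<in> P" using a(2) id_ramsey by blast
  then have "f \<in> P" by simp
  then show ?thesis using a by (auto simp: HS_def homogeneous_def)
qed

lemma sm_ge: "strict_mono (f :: nat \<Rightarrow> nat) \<Longrightarrow> n \<le> f n"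
proof (induction n)
  case 0 then show ?case by simp
next
  case (Suc n) then show ?case using strict_monoD[OF Suc.prems, of n "Suc n"] by simp
qed

section \<open>F1: a path gives an odd solution\<close>

lemma F1:
  assumes x: "\<forall>n. map x [0..<n] \<in> M"
  shows "(\<lambda>i. 2 * list_encode (map x [0..<i]) + 1) \<in> HS (PM M) \<inter> PM M"
proof -
  let ?f = "\<lambda>i. 2 * list_encode (map x [0..<i]) + 1"
  have sm: "strict_mono ?f"
    by (rule strict_mono_Suc_iff[THEN iffD2]) (simp add: le_snoc)
  then have fr: "?f \<in> ramsey" by (simp add: ramsey_def)
  have dcf: "dc (Suc (2 * list_encode (map x [0..<i]))) = map x [0..<i]" for i by (simp add: dc_def)
  show ?thesis
  proof (rule sol_intro[OF fr])
    fix g assume g: "g \<in> ramsey"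
    then have g01: "g 0 < g 1" by (simp add: ramsey_def strict_mono_def)
    let ?s = "[?f (g 0), ?f (g 1)]"
    have "oddok M ?s" unfolding oddok_def
      using x g01 by (simp add: dcf spre_def)
    moreover have "map (?f \<circ> g) [0..<length ?s] = ?s" by (simp add: numeral_2_eq_2)
    ultimately show "?f \<circ> g \<in> PM M"
      using ramsey_comp[OF fr g] by (auto simp: mem_PM listedM_def)
  qed
qed

section \<open>F2: an odd solution gives a path\<close>

lemma F2_pair:
  assumes f: "f \<in> HS (PM M) \<inter> PM M" and ij: "i < j" and odd: "odd (f i)"
  shows "odd (f j) \<and> dc (f i) \<in> M \<and> dc (f j) \<in> M \<and> spre (dc (f i)) (dc (f j))"
proof -
  define g where "g = (\<lambda>n. if n = 0 then i else j + n - 1)"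
  have "strict_mono g" unfolding strict_mono_def g_def using ij by auto
  then have "f \<circ> g \<in> PM M" using sol_all[OF f] by (simp add: ramsey_def)
  then obtain s where s: "listedM M s" "map (f \<circ> g) [0..<length s] = s" by (auto simp: mem_PM)
  have "\<not> evenok M s"
  proof
    assume "evenok M s"
    then have "s \<noteq> []" "even (s ! 0)" by (auto simp: evenok_def)
    moreover have "s ! 0 = f i" using map_eq_nth[OF s(2), of 0] \<open>s \<noteq> []\<close> by (simp add: g_def)
    ultimately show False using odd by simp
  qed
  then have o: "oddok M s" using s(1) by (simp add: listedM_def)
  then have "length s = 2" by (simp add: oddok_def)
  then have "s ! 0 = f i" "s ! 1 = f j" using map_eq_nth[OF s(2), of 0] map_eq_nth[OF s(2), of 1]
    by (simp_all add: g_def)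
  then show ?thesis using o by (simp add: oddok_def)
qed

lemma F2:
  assumes f: "f \<in> HS (PM M) \<inter> PM M" and odd: "odd (f 0)" and pc: "pclosed M"
  shows "(\<lambda>n. nthc (f (Suc n) div 2) n) \<in> body M"
proof -
  let ?s = "\<lambda>i. dc (f i)"
  have allodd: "odd (f j)" for j
    using F2_pair[OF f _ odd, of j] odd by (cases j) auto
  have ch: "i < j \<Longrightarrow> spre (?s i) (?s j) \<and> ?s j \<in> M" for i j
    using F2_pair[OF f _ allodd] by blast
  have len: "i \<le> length (?s i)" for i
  proof (induction i)
    case 0 then show ?case by simp
  next
    case (Suc i) then show ?case using ch[of i "Suc i"] by (simp add: spre_def)
  qed
  have eq: "map (\<lambda>n. ?s (Suc n) ! n) [0..<n] = take n (?s n)" for n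
  proof (rule nth_equalityI)
    show "length (map (\<lambda>n. ?s (Suc n) ! n) [0..<n]) = length (take n (?s n))"
      using len[of n] by simp
    fix m assume "m < length (map (\<lambda>n. ?s (Suc n) ! n) [0..<n])"
    then have m: "m < n" by simp
    have "?s (Suc m) ! m = ?s n ! m"
    proof (cases "Suc m = n")
      case True then show ?thesis by simp
    next
      case False
      then have "Suc m < n" using m by simp
      then show ?thesis using ch[of "Suc m" n] len[of "Suc m"] by (simp add: spre_def)
    qed
    then show "map (\<lambda>n. ?s (Suc n) ! n) [0..<n] ! m = take n (?s n) ! m" using m len[of n] by simp
  qed
  have inM: "?s n \<in> M" for n
    using F2_pair[OF f _ allodd, of n "Suc n"] by simp
  have fe: "(\<lambda>n. nthc (f (Suc n) div 2) n) = (\<lambda>n. ?s (Suc n) ! n)"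
  proof
    fix n
    have "n < length (?s (Suc n))" using len[of "Suc n"] by simp
    then show "nthc (f (Suc n) div 2) n = ?s (Suc n) ! n" by (simp add: nthc_def lenc_def dc_def)
  qed
  show ?thesis unfolding body_def fe
  proof
    show "\<forall>n. map (\<lambda>n. ?s (Suc n) ! n) [0..<n] \<in> M"
    proof
      fix n
      have "take n (?s n) @ drop n (?s n) \<in> M" using inM by simp
      then show "map (\<lambda>n. ?s (Suc n) ! n) [0..<n] \<in> M" using pc eq unfolding pclosed_def by metis
    qed
  qed
qed

section \<open>F3: an even solution means no path\<close>

lemma F3:
  assumes f: "f \<in> HS (PM M) \<inter> PM M" and ev: "even (f 0)"
  shows "body M = {}"
proof (rule ccontr)
  assume "body M \<noteq> {}"
  then obtain x where x: "\<forall>n. map x [0..<n] \<in> M" unfolding body_def by auto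
  define g where "g = rec_nat 0 (\<lambda>i gi. gi + 1 + x i)"
  have g0: "g 0 = 0" and gS: "g (Suc i) = g i + 1 + x i" for i by (simp_all add: g_def)
  have sg: "strict_mono g" by (rule strict_mono_Suc_iff[THEN iffD2]) (simp add: gS)
  have fr: "strict_mono f" using f by (simp add: HS_def homogeneous_def ramsey_def)
  have "f \<circ> g \<in> PM M" using sol_all[OF f] sg by (simp add: ramsey_def)
  then obtain s where s: "listedM M s" "map (f \<circ> g) [0..<length s] = s" by (auto simp: mem_PM)
  have s0: "s \<noteq> [] \<Longrightarrow> s ! 0 = f 0" using map_eq_nth[OF s(2), of 0] g0 by simp
  have "\<not> oddok M s"
  proof
    assume "oddok M s"
    then have "s \<noteq> []" "odd (s ! 0)" by (auto simp: oddok_def)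
    then show False using s0 ev by simp
  qed
  then have e: "evenok M s" using s(1) by (simp add: listedM_def)
  then have ne: "s \<noteq> []" by (simp add: evenok_def)
  let ?\<sigma> = "map x [0..<length s - 1]"
  have "bnd ?\<sigma> s" unfolding bnd_def
  proof (intro conjI allI impI)
    show "Suc (length ?\<sigma>) = length s" using ne by simp
    fix i assume "i < length ?\<sigma>"
    then have i: "Suc i < length s" by simp
    have "s ! Suc i = f (g (Suc i))" using map_eq_nth[OF s(2) i] by simp
    moreover have "x i \<le> g (Suc i)" by (simp add: gS)
    moreover have "g (Suc i) \<le> f (g (Suc i))" by (rule sm_ge[OF fr])
    ultimately show "?\<sigma> ! i \<le> s ! Suc i" using \<open>i < length ?\<sigma>\<close> by simp
  qed
  then show False using e x by (auto simp: evenok_def)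
qed

lemma take_in_pclosed: "pclosed M \<Longrightarrow> s \<in> M \<Longrightarrow> take n s \<in> M"
  unfolding pclosed_def using append_take_drop_id[of n s] by metis

lemma konig:
  assumes pc: "pclosed M" and all: "\<forall>n. \<exists>\<sigma>\<in>M. length \<sigma> = n \<and> (\<forall>i<n. \<sigma> ! i \<le> b i)"
  shows "\<exists>x. \<forall>n. map x [0..<n] \<in> M"
proof -
  define B where "B = {\<sigma>\<in>M. \<forall>i<length \<sigma>. \<sigma> ! i \<le> b i}"
  have Bpc: "\<sigma> \<in> B \<Longrightarrow> take n \<sigma> \<in> B" for \<sigma> n
    using take_in_pclosed[OF pc] unfolding B_def by auto
  define good where "good \<tau> \<longleftrightarrow> (\<forall>n. \<exists>\<sigma>\<in>B. length \<sigma> = n + length \<tau> \<and> take (length \<tau>) \<sigma> = \<tau>)" for \<tau>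
  have g0: "good []" unfolding good_def B_def
  proof
    fix n
    obtain \<sigma> where "\<sigma> \<in> M" "length \<sigma> = n" "\<forall>i<n. \<sigma> ! i \<le> b i" using all by blast
    then show "\<exists>\<sigma>\<in>{\<sigma> \<in> M. \<forall>i<length \<sigma>. \<sigma> ! i \<le> b i}. length \<sigma> = n + length [] \<and> take (length []) \<sigma> = []"
      by auto
  qed
  have step: "\<exists>a. good (\<tau> @ [a])" if gt: "good \<tau>" for \<tau>
  proof (rule ccontr)
    assume "\<not> (\<exists>a. good (\<tau> @ [a]))"
    then have "\<forall>a. \<exists>n. \<not> (\<exists>\<sigma>\<in>B. length \<sigma> = n + length (\<tau> @ [a]) \<and> take (length (\<tau> @ [a])) \<sigma> = \<tau> @ [a])"
      unfolding good_def by blast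
    then have "\<forall>a. \<exists>n. \<not> (\<exists>\<sigma>\<in>B. length \<sigma> = n + Suc (length \<tau>) \<and> take (Suc (length \<tau>)) \<sigma> = \<tau> @ [a])"
      by simp
    from choice[OF this] obtain na where na: "\<And>a. \<not> (\<exists>\<sigma>\<in>B. length \<sigma> = na a + Suc (length \<tau>) \<and> take (Suc (length \<tau>)) \<sigma> = \<tau> @ [a])"
      by blast
    define N where "N = Max (na ` {..b (length \<tau>)})"
    obtain \<sigma> where \<sigma>: "\<sigma> \<in> B" "length \<sigma> = Suc N + length \<tau>" "take (length \<tau>) \<sigma> = \<tau>"
      using gt unfolding good_def by blast
    define a where "a = \<sigma> ! length \<tau>"
    have ab: "a \<le> b (length \<tau>)" using \<sigma> unfolding a_def B_def by auto
    then have naN: "na a \<le> N" unfolding N_def by (auto intro: Max_ge)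
    let ?\<rho> = "take (na a + Suc (length \<tau>)) \<sigma>"
    have "?\<rho> \<in> B" using Bpc \<sigma>(1) by blast
    moreover have "length ?\<rho> = na a + Suc (length \<tau>)" using \<sigma>(2) naN by simp
    moreover have "take (Suc (length \<tau>)) ?\<rho> = \<tau> @ [a]"
    proof -
      have "take (Suc (length \<tau>)) ?\<rho> = take (Suc (length \<tau>)) \<sigma>" by (simp add: min_def)
      also have "\<dots> = take (length \<tau>) \<sigma> @ [\<sigma> ! length \<tau>]"
        using \<sigma>(2) by (simp add: take_Suc_conv_app_nth)
      finally show ?thesis using \<sigma>(3) a_def by simp
    qed
    ultimately show False using na[of a] by blast
  qed
  define t where "t = rec_nat [] (\<lambda>k tk. tk @ [SOME a. good (tk @ [a])])"
  have t0: "t 0 = []" and tS: "t (Suc k) = t k @ [SOME a. good (t k @ [a])]" for k by (simp_all add: t_def)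
  have gt: "good (t k)" for k
  proof (induction k)
    case 0 then show ?case using g0 t0 by simp
  next
    case (Suc k) then show ?case using someI_ex[OF step[OF Suc.IH]] tS[of k] by simp
  qed
  have lt: "length (t k) = k" for k by (induction k) (simp_all add: t0 tS)
  define x where "x n = t (Suc n) ! n" for n
  have mt: "map x [0..<n] = t n" for n
  proof (induction n)
    case 0 then show ?case by (simp add: t0)
  next
    case (Suc n)
    have "x n = (SOME a. good (t n @ [a]))" unfolding x_def using tS[of n] lt[of n] by (simp add: nth_append)
    then show ?case using Suc tS[of n] by simp
  qed
  have "t n \<in> M" for n
  proof -
    obtain \<sigma> where "\<sigma> \<in> B" "length \<sigma> = 0 + length (t n)" "take (length (t n)) \<sigma> = t n"
      using gt[of n] unfolding good_def by blast
    then show ?thesis unfolding B_def by auto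
  qed
  then show ?thesis using mt by metis
qed

section \<open>F4: no path and prefix-closed gives an even solution\<close>

lemma F4:
  assumes pc: "pclosed M" and nb: "body M = {}"
  shows "(\<lambda>i. 2 * i) \<in> HS (PM M) \<inter> PM M"
proof (rule sol_intro)
  show "(\<lambda>i. 2 * i) \<in> ramsey" by (simp add: ramsey_def strict_mono_def)
  fix g assume g: "g \<in> ramsey"
  let ?h = "(\<lambda>i::nat. 2 * i) \<circ> g"
  have hr: "?h \<in> ramsey" using g by (simp add: ramsey_def strict_mono_def)
  have "\<exists>n. \<not> (\<exists>\<sigma>\<in>M. length \<sigma> = n \<and> (\<forall>i<n. \<sigma> ! i \<le> ?h (Suc i)))"
  proof (rule ccontr)
    assume "\<not> ?thesis"
    then have "\<forall>n. \<exists>\<sigma>\<in>M. length \<sigma> = n \<and> (\<forall>i<n. \<sigma> ! i \<le> ?h (Suc i))" by blast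
    from konig[OF pc this] obtain x where "\<forall>n. map x [0..<n] \<in> M" by blast
    then show False using nb unfolding body_def by auto
  qed
  then obtain n where n: "\<not> (\<exists>\<sigma>\<in>M. length \<sigma> = n \<and> (\<forall>i<n. \<sigma> ! i \<le> ?h (Suc i)))" by blast
  let ?s = "map ?h [0..<Suc n]"
  have "evenok M ?s" unfolding evenok_def
  proof (intro conjI)
    show "?s \<noteq> []" by simp
    show "even (?s ! 0)" by (simp del: upt_Suc)
    show "\<not> (\<exists>\<sigma>. bnd \<sigma> ?s \<and> \<sigma> \<in> M)"
    proof
      assume "\<exists>\<sigma>. bnd \<sigma> ?s \<and> \<sigma> \<in> M"
      then obtain \<sigma> where "bnd \<sigma> ?s" "\<sigma> \<in> M" by blast
      then have "length \<sigma> = n" "\<forall>i<n. \<sigma> ! i \<le> ?h (Suc i)"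
        unfolding bnd_def by (auto simp del: upt_Suc simp: nth_map_upt)
      then show False using n \<open>\<sigma> \<in> M\<close> by blast
    qed
  qed
  then show "?h \<in> PM M" using hr by (auto simp: mem_PM listedM_def simp del: upt_Suc)
qed

definition EvenE where "EvenE a = EqE (Sub a (Mul (K 2) (Div2E a))) (K 0)"
definition OddE where "OddE a = NotE (EvenE a)"
definition TailE where "TailE a = Let a tailbody"

lemma eval_EvenE[simp]: "eval (EvenE a) xs = (if even (eval a xs) then 1 else 0)"
  by (simp add: EvenE_def) presburger
lemma eval_OddE[simp]: "eval (OddE a) xs = (if odd (eval a xs) then 1 else 0)"
  by (simp add: OddE_def)
lemma eval_TailE[simp]: "eval (TailE a) xs = tailc (eval a xs)"
  by (simp add: TailE_def tailbody_def tailc_def)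
lemma wfe_EvenE[simp]: "wfe (EvenE a) k = wfe a k" by (auto simp: EvenE_def)
lemma wfe_OddE[simp]: "wfe (OddE a) k = wfe a k" by (auto simp: OddE_def)
lemma wfe_TailE[simp]: "wfe (TailE a) k = wfe a k" by (auto simp: TailE_def tailbody_def)

lemma lenc_code[simp]: "lenc (list_encode l) = length l" by (simp add: lenc_def)
lemma nthc_code[simp]: "i < length l \<Longrightarrow> nthc (list_encode l) i = l ! i" by (simp add: nthc_def lenc_def)
lemma nthc_dec: "i < length (list_decode c) \<Longrightarrow> nthc c i = list_decode c ! i" by (simp add: nthc_def lenc_def)

definition BODY1 where
  "BODY1 Mb = AndE (EqE (Add (LenE (V 0)) (K 1)) (LenE (V 1)))
     (AndE (AllE (LenE (V 0)) (LeE (NthE (V 1) (V 0)) (NthE (V 2) (Add (V 0) (K 1)))))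
       (Let (V 2) (Let (V 1) Mb)))"
definition EVENOK where
  "EVENOK Mb = AndE (Lt (K 0) (LenE (V 0))) (AndE (EvenE (NthE (V 0) (K 0)))
     (NotE (ExE (Add (V 0) (K 1)) (BODY1 Mb))))"
definition ODDB where
  "ODDB Mb = AndE (Let (V 3) (Let (V 2) Mb)) (AndE (Let (V 3) (Let (V 1) Mb))
     (AndE (Lt (LenE (V 1)) (LenE (V 0)))
       (AllE (LenE (V 1)) (EqE (NthE (V 2) (V 0)) (NthE (V 1) (V 0))))))"
definition ODDOK where
  "ODDOK Mb = AndE (EqE (LenE (V 0)) (K 2)) (AndE (OddE (NthE (V 0) (K 0)))
     (AndE (OddE (NthE (V 0) (K 1)))
       (Let (Div2E (NthE (V 0) (K 0))) (Let (Div2E (NthE (V 1) (K 1))) (ODDB Mb)))))"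
definition LB where "LB Mb = OrE (EVENOK Mb) (ODDOK Mb)"

lemma wfe_mono: "wfe e k \<Longrightarrow> k \<le> k' \<Longrightarrow> wfe e k'"
  by (induction e arbitrary: k k') auto

lemma wfe_LB: "wfe Mb 2 \<Longrightarrow> wfe (LB Mb) 2"
  by (auto simp: LB_def EVENOK_def ODDOK_def ODDB_def BODY1_def elim: wfe_mono)

lemma bnd_code: "bnd \<sigma> s \<Longrightarrow> list_encode \<sigma> \<le> list_encode s"
proof -
  assume b: "bnd \<sigma> s"
  then have ne: "s \<noteq> []" by (auto simp: bnd_def)
  have "list_encode \<sigma> \<le> list_encode (tl s)"
    using b by (intro le_mono) (auto simp: bnd_def nth_tl)
  also have "\<dots> \<le> list_encode s" using tl_code_less[OF ne] by simp
  finally show ?thesis .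
qed

lemma BODY1_sem:
  assumes H: "\<forall>rest. (eval Mb (c # w # rest) \<noteq> 0) = (list_decode c \<in> M)"
  shows "(eval (BODY1 Mb) (c # n # w # rest) \<noteq> 0) = (bnd (list_decode c) (list_decode n) \<and> list_decode c \<in> M)"
proof -
  have "(\<forall>i<lenc c. nthc c i \<le> nthc n (i + 1)) = (\<forall>i<length (list_decode c). list_decode c ! i \<le> list_decode n ! Suc i)"
    if "lenc c + 1 = lenc n"
    using that by (auto simp: nthc_dec lenc_def)
  then show ?thesis using H by (auto simp: BODY1_def bnd_def lenc_def)
qed

lemma EVENOK_sem:
  assumes H: "\<forall>c\<le>n. \<forall>rest. (eval Mb (c # w # rest) \<noteq> 0) = (list_decode c \<in> M)"
  shows "(eval (EVENOK Mb) (n # w # rest) \<noteq> 0) = evenok M (list_decode n)"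
proof -
  have ex: "(\<exists>c<n + 1. eval (BODY1 Mb) (c # n # w # rest) \<noteq> 0) = (\<exists>\<sigma>. bnd \<sigma> (list_decode n) \<and> \<sigma> \<in> M)"
  proof
    assume "\<exists>c<n + 1. eval (BODY1 Mb) (c # n # w # rest) \<noteq> 0"
    then obtain c where "c < n + 1" "eval (BODY1 Mb) (c # n # w # rest) \<noteq> 0" by blast
    then show "\<exists>\<sigma>. bnd \<sigma> (list_decode n) \<and> \<sigma> \<in> M" using BODY1_sem[of Mb c w M n rest] H by auto
  next
    assume "\<exists>\<sigma>. bnd \<sigma> (list_decode n) \<and> \<sigma> \<in> M"
    then obtain \<sigma> where s: "bnd \<sigma> (list_decode n)" "\<sigma> \<in> M" by blast
    let ?c = "list_encode \<sigma>"
    have "?c \<le> n" using bnd_code[OF s(1)] by simp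
    then have "eval (BODY1 Mb) (?c # n # w # rest) \<noteq> 0" using BODY1_sem[of Mb ?c w M n rest] H s by auto
    then show "\<exists>c<n + 1. eval (BODY1 Mb) (c # n # w # rest) \<noteq> 0" using \<open>?c \<le> n\<close> by (intro exI[of _ ?c]) auto
  qed
  have "list_decode n \<noteq> [] \<Longrightarrow> nthc n 0 = list_decode n ! 0" by (simp add: nthc_dec)
  then show ?thesis using ex by (auto simp: EVENOK_def evenok_def lenc_def)
qed

lemma ODDOK_sem:
  assumes H: "\<forall>c\<le>n. \<forall>rest. (eval Mb (c # w # rest) \<noteq> 0) = (list_decode c \<in> M)"
  shows "(eval (ODDOK Mb) (n # w # rest) \<noteq> 0) = oddok M (list_decode n)"
proof (cases "length (list_decode n) = 2")
  case False then show ?thesis by (simp add: ODDOK_def oddok_def lenc_def)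
next
  case True
  let ?s = "list_decode n"
  have n0: "nthc n 0 = ?s ! 0" and n1: "nthc n 1 = ?s ! 1" using True by (simp_all add: nthc_dec)
  have le0: "?s ! 0 div 2 \<le> n" using elem_le_code[of 0 ?s] True by simp
  have le1: "?s ! 1 div 2 \<le> n" using elem_le_code[of 1 ?s] True by simp
  let ?a = "?s ! 0 div 2" and ?b = "?s ! 1 div 2"
  have Ma: "(eval Mb (?a # w # rest') \<noteq> 0) = (dc (?s ! 0) \<in> M)" for rest'
    using H le0 by (simp add: dc_def)
  have Mb': "(eval Mb (?b # w # rest') \<noteq> 0) = (dc (?s ! 1) \<in> M)" for rest'
    using H le1 by (simp add: dc_def)
  have sp: "(lenc ?a < lenc ?b \<and> (\<forall>i<lenc ?a. nthc ?a i = nthc ?b i)) = spre (dc (?s ! 0)) (dc (?s ! 1))"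
    by (auto simp: spre_def dc_def lenc_def nthc_dec)
  have l2: "lenc n = 2" using True by (simp add: lenc_def)
  have e: "(eval (ODDOK Mb) (n # w # rest) \<noteq> 0) \<longleftrightarrow> (odd (?s ! 0) \<and> odd (?s ! 1) \<and> dc (?s ! 0) \<in> M \<and> dc (?s ! 1) \<in> M
     \<and> (lenc ?a < lenc ?b \<and> (\<forall>i<lenc ?a. nthc ?a i = nthc ?b i)))"
    using l2 n0 n1 Ma Mb' by (simp add: ODDOK_def ODDB_def del: One_nat_def) blast
  show ?thesis unfolding oddok_def e sp using True by simp
qed

lemma LB_sem:
  assumes H: "\<forall>c\<le>n. \<forall>rest. (eval Mb (c # w # rest) \<noteq> 0) = (list_decode c \<in> M)"
  shows "(eval (LB Mb) (n # w # rest) \<noteq> 0) = listedM M (list_decode n)"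
  using EVENOK_sem[OF H] ODDOK_sem[OF H] by (simp add: LB_def listedM_def)

definition ALPHA where
  "ALPHA Mb = Let (FstE (V 0)) (Let (SndE (V 1)) (If (LeE (LenE (V 0)) (V 1)) (K 0)
     (If (Let (V 0) (Let (V 2) (LB Mb))) (Add (V 1) (K 2)) (K 1))))"

lemma wfe_ALPHA: "wfe Mb 2 \<Longrightarrow> wfe (ALPHA Mb) 1"
  using wfe_LB[of Mb] by (auto simp: ALPHA_def elim: wfe_mono)

lemma ALPHA_sem:
  assumes H: "n < lenc w \<Longrightarrow> \<forall>c\<le>n. \<forall>rest. (eval Mb (c # w # rest) \<noteq> 0) = (list_decode c \<in> M)"
  shows "eval (ALPHA Mb) [prod_encode (n, w)] = (if lenc w \<le> n then 0 else if listedM M (list_decode n) then n + 2 else 1)"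
proof (cases "lenc w \<le> n")
  case True then show ?thesis by (simp add: ALPHA_def)
next
  case False
  then have "(eval (LB Mb) (n # w # w # n # [prod_encode (n, w)]) \<noteq> 0) = listedM M (list_decode n)"
    using H by (intro LB_sem) simp
  then show ?thesis using False by (simp add: ALPHA_def)
qed

lemma assoc_val_I:
  assumes "\<And>n k. assoc_out a p n k = (if k < N n then 0 else Suc (F n))"
  shows "assoc_val a p F"
  unfolding assoc_val_def
proof
  fix n
  show "\<exists>k. 0 < assoc_out a p n k \<and> (\<forall>j<k. assoc_out a p n j = 0) \<and> F n = assoc_out a p n k - 1"
    by (rule exI[of _ "N n"]) (simp add: assms)
qed

lemma assoc_val_unique: "assoc_val a p q \<Longrightarrow> assoc_val a p q' \<Longrightarrow> q = q'"
proof
  fix n assume a: "assoc_val a p q" "assoc_val a p q'"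
  obtain k where k: "0 < assoc_out a p n k" "\<forall>j<k. assoc_out a p n j = 0" "q n = assoc_out a p n k - 1"
    using a(1) unfolding assoc_val_def by blast
  obtain k' where k': "0 < assoc_out a p n k'" "\<forall>j<k'. assoc_out a p n j = 0" "q' n = assoc_out a p n k' - 1"
    using a(2) unfolding assoc_val_def by blast
  have "k = k'" using k k' by (metis less_not_refl3 linorder_neqE_nat)
  then show "q n = q' n" using k k' by simp
qed

lemma lenc_prefix[simp]: "lenc (prefix_code p k) = k" by (simp add: prefix_code_def)
lemma nthc_prefix[simp]: "j < k \<Longrightarrow> nthc (prefix_code p k) j = p j" by (simp add: prefix_code_def)

definition MT where "MT = EqE (NthE (V 1) (V 0)) (K 1)"

lemma MT_sem: "c < k \<Longrightarrow> (eval MT (c # prefix_code p k # rest) \<noteq> 0) = (list_decode c \<in> tree_of p)"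
  by (simp add: MT_def tree_of_def)

definition qname :: "nat list set \<Rightarrow> baire" where
  "qname M = (\<lambda>n. if listedM M (list_decode n) then Suc n else 0)"

lemma open_qname: "open_named (qname M) = PM M"
proof -
  have "listed_strings (qname M) = {s. listedM M s}"
    unfolding listed_strings_def qname_def by (auto split: if_splits)
  then show ?thesis by (simp add: open_named_def PM_def)
qed

lemma exist_sol: "pclosed M \<Longrightarrow> HS (PM M) \<inter> PM M \<noteq> {}"
proof (cases "body M = {}")
  case True
  assume "pclosed M"
  then show ?thesis using F4[OF _ True] by blast
next
  case False
  then obtain x where "\<forall>n. map x [0..<n] \<in> M" unfolding body_def by auto
  then show ?thesis using F1 by blast
qed

lemma alpha_assoc:
  assumes H: "\<And>n k c rest. n < k \<Longrightarrow> c \<le> n \<Longrightarrow> (eval Mb (c # prefix_code p k # rest) \<noteq> 0) = (list_decode c \<in> M)"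
  shows "assoc_val (\<lambda>x. eval (ALPHA Mb) [x]) p (qname M)"
proof (rule assoc_val_I[where N = Suc])
  fix n k
  have "eval (ALPHA Mb) [prod_encode (n, prefix_code p k)] =
        (if k \<le> n then 0 else if listedM M (list_decode n) then n + 2 else 1)"
    using ALPHA_sem[of n "prefix_code p k" Mb M] H by simp
  then show "assoc_out (\<lambda>x. eval (ALPHA Mb) [x]) p n k = (if k < Suc n then 0 else Suc (qname M n))"
    by (simp add: assoc_out_def qname_def)
qed

definition BETA1 where
  "BETA1 = Let (FstE (V 0)) (Let (SndE (V 1)) (If (Lt (LenE (V 0)) (Add (Mul (K 2) (V 1)) (K 2))) (K 0)
     (Add (K 1) (If (EqE (V 1) (K 0)) (OddE (NthE (V 0) (K 1)))
        (If (OddE (NthE (V 0) (K 1)))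
           (NthE (Div2E (NthE (V 0) (Add (Mul (K 2) (V 1)) (K 1)))) (Sub (V 1) (K 1))) (K 0))))))"

definition out1 :: "baire \<Rightarrow> baire" where
  "out1 f = (\<lambda>n. if n = 0 then (if odd (f 0) then 1 else 0)
                 else if odd (f 0) then nthc (f n div 2) (n - 1) else 0)"

lemma bpair_odd[simp]: "bpair p f (2 * n + 1) = f n" by (simp add: bpair_def)

lemma beta1_assoc: "assoc_val (\<lambda>x. eval BETA1 [x]) (bpair p f) (out1 f)"
proof (rule assoc_val_I[where N = "\<lambda>n. 2 * n + 2"])
  fix n k
  show "assoc_out (\<lambda>x. eval BETA1 [x]) (bpair p f) n k = (if k < 2 * n + 2 then 0 else Suc (out1 f n))"
  proof (cases "k < 2 * n + 2")
    case True then show ?thesis by (simp add: assoc_out_def BETA1_def)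
  next
    case False
    then have a: "nthc (prefix_code (bpair p f) k) 1 = f 0"
      and b: "nthc (prefix_code (bpair p f) k) (2 * n + 1) = f n"
      by (simp_all add: bpair_def)
    show ?thesis using False a b by (simp add: assoc_out_def BETA1_def out1_def)
  qed
qed

lemma tree_pclosed: "is_tree_name p \<Longrightarrow> pclosed (tree_of p)"
  unfolding is_tree_name_def pclosed_def by blast

theorem sTC_le: "sTC_Baire \<le>\<^sub>W FindHS_Sigma01"
  unfolding weihrauch_le_def
proof (rule exI[of _ "\<lambda>x. eval (ALPHA MT) [x]"], rule exI[of _ "\<lambda>x. eval BETA1 [x]"], intro conjI allI impI ballI)
  show "computable_nat (\<lambda>x. eval (ALPHA MT) [x])"
    by (rule computable_from_ex, rule wfe_ALPHA) (simp add: MT_def)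
  show "computable_nat (\<lambda>x. eval BETA1 [x])"
    by (rule computable_from_ex) (simp add: BETA1_def)
  fix G p assume G: "realizes G FindHS_Sigma01" and p: "p \<in> pdom sTC_Baire"
  let ?M = "tree_of p"
  have tn: "is_tree_name p" using p by (simp add: sTC_Baire_def)
  have av: "assoc_val (\<lambda>x. eval (ALPHA MT) [x]) p (qname ?M)"
    by (rule alpha_assoc) (simp add: MT_def tree_of_def)
  have qd: "qname ?M \<in> pdom FindHS_Sigma01"
    using exist_sol[OF tree_pclosed[OF tn]] by (simp add: FindHS_Sigma01_def open_qname)
  let ?f = "G (qname ?M)"
  have "psol FindHS_Sigma01 (qname ?M) ?f" using G qd unfolding realizes_def by blast
  then have f: "?f \<in> HS (PM ?M) \<inter> PM ?M" by (simp add: FindHS_Sigma01_def open_qname)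
  have ps: "psol sTC_Baire p (out1 ?f)"
  proof (cases "odd (?f 0)")
    case True
    have "(\<lambda>n. nthc (?f (Suc n) div 2) n) \<in> body ?M" by (rule F2[OF f True tree_pclosed[OF tn]])
    then show ?thesis using True by (simp add: sTC_Baire_def out1_def)
  next
    case False
    then show ?thesis using F3[OF f] by (simp add: sTC_Baire_def out1_def)
  qed
  show "\<exists>q. assoc_val (\<lambda>x. eval (ALPHA MT) [x]) p q \<and> q \<in> pdom FindHS_Sigma01 \<and>
          (\<exists>r. assoc_val (\<lambda>x. eval BETA1 [x]) (bpair p (G q)) r \<and> psol sTC_Baire p r)"
    using av qd beta1_assoc ps by blast
qed

definition viol :: "(nat \<Rightarrow> nat) \<Rightarrow> nat \<Rightarrow> bool" where
  "viol P c \<longleftrightarrow> 1 < P c \<or> (P (fst (prod_decode c)) = 1 \<and> P (snd (prod_decode c)) \<noteq> 1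
     \<and> lenc (snd (prod_decode c)) \<le> lenc (fst (prod_decode c))
     \<and> (\<forall>i<lenc (snd (prod_decode c)). nthc (snd (prod_decode c)) i = nthc (fst (prod_decode c)) i))"

definition Mchi :: "(nat \<Rightarrow> nat) \<Rightarrow> nat list set" where
  "Mchi P = {\<sigma>. \<sigma> = [] \<or> \<sigma> = [1] \<or> (\<sigma> \<noteq> [] \<and> hd \<sigma> = 0 \<and> P (list_encode (tl \<sigma>)) = 1)
     \<or> (2 \<le> length \<sigma> \<and> \<sigma> ! 0 = 1 \<and> (\<forall>i<length \<sigma>. 2 \<le> i \<longrightarrow> \<sigma> ! i = 0) \<and> viol P (\<sigma> ! 1))}"

definition VB where
  "VB = OrE (Lt (K 1) (NthE (V 2) (V 0))) (AndE (EqE (NthE (V 2) (FstE (V 0))) (K 1))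
     (AndE (NotE (EqE (NthE (V 2) (SndE (V 0))) (K 1)))
       (AndE (LeE (LenE (SndE (V 0))) (LenE (FstE (V 0))))
         (AllE (LenE (SndE (V 0))) (EqE (NthE (SndE (V 1)) (V 0)) (NthE (FstE (V 1)) (V 0)))))))"

definition MCHI where
  "MCHI = OrE (EqE (V 0) (K 0)) (OrE (AndE (EqE (LenE (V 0)) (K 1)) (EqE (NthE (V 0) (K 0)) (K 1)))
     (OrE (AndE (Lt (K 0) (LenE (V 0))) (AndE (EqE (NthE (V 0) (K 0)) (K 0)) (EqE (NthE (V 1) (TailE (V 0))) (K 1))))
       (AndE (LeE (K 2) (LenE (V 0))) (AndE (EqE (NthE (V 0) (K 0)) (K 1))
          (AndE (AllE (LenE (V 0)) (OrE (Lt (V 0) (K 2)) (EqE (NthE (V 1) (V 0)) (K 0))))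
            (Let (NthE (V 0) (K 1)) VB))))))"

lemma wfe_MCHI: "wfe MCHI 2"
  by (simp add: MCHI_def VB_def)

lemma VB_sem: "(eval VB (c' # c # w # rest) \<noteq> 0) = viol (nthc w) c'"
  by (auto simp: VB_def viol_def)

lemma tailc_code: "tailc (list_encode l) = list_encode (tl l)"
  by (metis list_decode_inverse list_encode_inverse tailc_dec)

lemma MCHI_sem: "(eval MCHI (c # w # rest) \<noteq> 0) = (list_decode c \<in> Mchi (nthc w))"
proof -
  let ?s = "list_decode c"
  have c: "c = list_encode ?s" by simp
  have e1: "(c = 0) = (?s = [])" by (simp add: list_decode_eq_Nil)
  have e2: "(lenc c = 1 \<and> nthc c 0 = 1) = (?s = [1])"
    by (auto simp: lenc_def nthc_dec length_Suc_conv)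
  have e3: "(0 < lenc c \<and> nthc c 0 = 0 \<and> nthc w (tailc c) = 1) = (?s \<noteq> [] \<and> hd ?s = 0 \<and> nthc w (list_encode (tl ?s)) = 1)"
    using tailc_code[of ?s] by (auto simp: lenc_def nthc_dec hd_conv_nth)
  have e4: "(2 \<le> lenc c \<and> nthc c 0 = 1 \<and> (\<forall>i<lenc c. i < 2 \<or> nthc c i = 0) \<and> viol (nthc w) (nthc c 1))
      = (2 \<le> length ?s \<and> ?s ! 0 = 1 \<and> (\<forall>i<length ?s. 2 \<le> i \<longrightarrow> ?s ! i = 0) \<and> viol (nthc w) (?s ! 1))"
  proof (cases "2 \<le> length ?s")
    case True
    then have "0 < length ?s" "1 < length ?s" by linarith+
    then have "nthc c 0 = ?s ! 0" "nthc c 1 = ?s ! 1" by (simp_all only: nthc_dec)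
    then show ?thesis using True by (auto simp: lenc_def nthc_dec)
  next
    case False then show ?thesis by (simp add: lenc_def)
  qed
  have "(eval MCHI (c # w # rest) \<noteq> 0) = ((c = 0) \<or> (lenc c = 1 \<and> nthc c 0 = 1) \<or>
       (0 < lenc c \<and> nthc c 0 = 0 \<and> nthc w (tailc c) = 1) \<or>
       (2 \<le> lenc c \<and> nthc c 0 = 1 \<and> (\<forall>i<lenc c. i < 2 \<or> nthc c i = 0) \<and> viol (nthc w) (nthc c 1)))"
    using VB_sem by (simp add: MCHI_def) blast
  then show ?thesis unfolding e1 e2 e3 e4 by (simp add: Mchi_def)
qed

lemma viol_local: "(\<And>j. j \<le> c \<Longrightarrow> P j = p j) \<Longrightarrow> viol P c = viol p c"
  using pd_le[of c] by (simp add: viol_def)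

lemma Mchi_local:
  assumes "\<And>j. j \<le> list_encode \<sigma> \<Longrightarrow> P j = p j"
  shows "(\<sigma> \<in> Mchi P) = (\<sigma> \<in> Mchi p)"
proof -
  have a: "\<sigma> \<noteq> [] \<Longrightarrow> P (list_encode (tl \<sigma>)) = p (list_encode (tl \<sigma>))"
    using assms tl_code_less[of \<sigma>] by simp
  have b: "1 < length \<sigma> \<Longrightarrow> viol P (\<sigma> ! 1) = viol p (\<sigma> ! 1)"
    using assms elem_le_code[of 1 \<sigma>] by (intro viol_local) simp
  show ?thesis unfolding Mchi_def using a b by auto
qed

lemma not_tree_viol: "\<not> is_tree_name p \<Longrightarrow> \<exists>c. viol p c"
proof -
  assume nt: "\<not> is_tree_name p"
  show ?thesis
  proof (cases "\<forall>c. p c \<le> 1")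
    case False
    then obtain c where "1 < p c" by (auto simp: not_le)
    then show ?thesis by (auto simp: viol_def)
  next
    case True
    then obtain s t where st: "s @ t \<in> tree_of p" "s \<notin> tree_of p" using nt by (auto simp: is_tree_name_def)
    let ?c = "prod_encode (list_encode (s @ t), list_encode s)"
    have "viol p ?c" using st by (auto simp: viol_def tree_of_def lenc_def nthc_dec nth_append)
    then show ?thesis by blast
  qed
qed

lemma tree_noviol: "is_tree_name p \<Longrightarrow> \<not> viol p c"
proof
  assume tn: "is_tree_name p" and v: "viol p c"
  have le1: "p c \<le> 1" using tn by (simp add: is_tree_name_def)
  let ?u = "list_decode (fst (prod_decode c))" and ?v = "list_decode (snd (prod_decode c))"
  have h: "p (list_encode ?u) = 1" "p (list_encode ?v) \<noteq> 1" "length ?v \<le> length ?u"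
      "\<forall>i<length ?v. ?v ! i = ?u ! i"
    using v le1 by (auto simp: viol_def lenc_def nthc_dec)
  have "?u = ?v @ drop (length ?v) ?u"
  proof (rule nth_equalityI)
    show "length ?u = length (?v @ drop (length ?v) ?u)" using h(3) by simp
    fix i assume "i < length ?u"
    then show "?u ! i = (?v @ drop (length ?v) ?u) ! i" using h(3,4) by (auto simp: nth_append)
  qed
  then have "?v @ drop (length ?v) ?u \<in> tree_of p" using h(1) by (simp add: tree_of_def)
  then have "?v \<in> tree_of p" using tn by (auto simp: is_tree_name_def)
  then show False using h(2) by (simp add: tree_of_def)
qed

lemma viol_body: "viol p c \<Longrightarrow> body (Mchi p) \<noteq> {}"
proof -
  assume v: "viol p c"
  let ?x = "\<lambda>i::nat. if i = 0 then 1 else if i = 1 then c else (0::nat)"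
  have "map ?x [0..<n] \<in> Mchi p" for n
  proof (cases "n \<le> 1")
    case True
    then have "n = 0 \<or> n = 1" by auto
    then show ?thesis by (auto simp: Mchi_def)
  next
    case False
    then show ?thesis using v by (auto simp: Mchi_def)
  qed
  then show ?thesis unfolding body_def by blast
qed

lemma chi_pclosed: "is_tree_name p \<Longrightarrow> pclosed (Mchi p)"
  unfolding pclosed_def
proof (intro allI impI)
  fix s t assume tn: "is_tree_name p" and st: "s @ t \<in> Mchi p"
  have nv: "\<not> viol p c" for c using tree_noviol[OF tn] .
  show "s \<in> Mchi p"
  proof (cases "s = []")
    case True then show ?thesis by (simp add: Mchi_def)
  next
    case False
    have "s @ t = [1] \<or> (hd (s @ t) = 0 \<and> p (list_encode (tl (s @ t))) = 1)"
      using st nv False by (auto simp: Mchi_def)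
    then show ?thesis
    proof
      assume "s @ t = [1]" then have "s = [1]" using False by (cases s) auto
      then show ?thesis by (simp add: Mchi_def)
    next
      assume a: "hd (s @ t) = 0 \<and> p (list_encode (tl (s @ t))) = 1"
      then have "tl s @ t \<in> tree_of p" using False by (simp add: tree_of_def)
      then have "tl s \<in> tree_of p" using tn by (auto simp: is_tree_name_def)
      then show ?thesis using a False by (simp add: Mchi_def tree_of_def)
    qed
  qed
qed

lemma chi_body_tree:
  assumes tn: "is_tree_name p" and x: "x \<in> body (Mchi p)"
  shows "(\<lambda>i. x (Suc i)) \<in> body (tree_of p)"
proof -
  have nv: "\<not> viol p c" for c using tree_noviol[OF tn] .
  have m: "map x [0..<n] \<in> Mchi p" for n using x by (simp add: body_def)
  have x2: "map x [0..<2] \<in> Mchi p" by (rule m)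
  have x1: "map x [0..<1] \<in> Mchi p" by (rule m)
  have "x 0 \<noteq> 1" using x2 nv by (auto simp: Mchi_def numeral_2_eq_2)
  then have x0: "x 0 = 0" using x1 by (auto simp: Mchi_def)
  show ?thesis unfolding body_def
  proof
    show "\<forall>n. map (\<lambda>i. x (Suc i)) [0..<n] \<in> tree_of p"
    proof
      fix n
      have mn: "map x [0..<Suc n] \<in> Mchi p" by (rule m)
      have e: "map x [0..<Suc n] = x 0 # map (\<lambda>i. x (Suc i)) [0..<n]"
        by (simp add: map_upt_Suc del: upt_Suc)
      show "map (\<lambda>i. x (Suc i)) [0..<n] \<in> tree_of p"
        using mn x0 nv unfolding e by (auto simp: Mchi_def tree_of_def)
    qed
  qed
qed

lemma tree_body_chi: "x \<in> body (tree_of p) \<Longrightarrow> body (Mchi p) \<noteq> {}"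
proof -
  assume x: "x \<in> body (tree_of p)"
  let ?y = "\<lambda>i. if i = 0 then 0 else x (i - 1)"
  have "map ?y [0..<n] \<in> Mchi p" for n
  proof (cases n)
    case 0 then show ?thesis by (simp add: Mchi_def)
  next
    case (Suc m)
    have e: "map ?y [0..<Suc m] = 0 # map x [0..<m]"
      by (simp add: map_upt_Suc del: upt_Suc)
    have "map x [0..<m] \<in> tree_of p" using x by (simp add: body_def)
    then show ?thesis unfolding Suc e by (simp add: Mchi_def tree_of_def)
  qed
  then show ?thesis unfolding body_def by blast
qed

definition BETA2 where
  "BETA2 = Let (FstE (V 0)) (Let (SndE (V 1)) (If (Lt (LenE (V 0)) (K 2)) (K 0)
     (Add (K 1) (EvenE (NthE (V 0) (K 1))))))"

definition out2 :: "baire \<Rightarrow> baire" where "out2 f = (\<lambda>n. if even (f 0) then 1 else 0)"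

lemma beta2_assoc: "assoc_val (\<lambda>x. eval BETA2 [x]) (bpair p f) (out2 f)"
proof (rule assoc_val_I[where N = "\<lambda>n. 2"])
  fix n k
  show "assoc_out (\<lambda>x. eval BETA2 [x]) (bpair p f) n k = (if k < 2 then 0 else Suc (out2 f n))"
  proof (cases "k < 2")
    case True then show ?thesis by (simp add: assoc_out_def BETA2_def)
  next
    case False
    then have a: "nthc (prefix_code (bpair p f) k) 1 = f 0" by (simp add: bpair_def)
    show ?thesis using False a by (simp add: assoc_out_def BETA2_def out2_def)
  qed
qed

theorem chi_le: "chi_Pi11 \<le>\<^sub>W FindHS_Sigma01"
  unfolding weihrauch_le_def
proof (rule exI[of _ "\<lambda>x. eval (ALPHA MCHI) [x]"], rule exI[of _ "\<lambda>x. eval BETA2 [x]"], intro conjI allI impI ballI)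
  show "computable_nat (\<lambda>x. eval (ALPHA MCHI) [x])"
    by (rule computable_from_ex, rule wfe_ALPHA, rule wfe_MCHI)
  show "computable_nat (\<lambda>x. eval BETA2 [x])"
    by (rule computable_from_ex) (simp add: BETA2_def)
  fix G p assume G: "realizes G FindHS_Sigma01" and p: "p \<in> pdom chi_Pi11"
  let ?M = "Mchi p"
  have av: "assoc_val (\<lambda>x. eval (ALPHA MCHI) [x]) p (qname ?M)"
  proof (rule alpha_assoc)
    fix n k c :: nat and rest :: "nat list" assume nk: "n < k" "c \<le> n"
    have "(eval MCHI (c # prefix_code p k # rest) \<noteq> 0) = (list_decode c \<in> Mchi (nthc (prefix_code p k)))"
      by (rule MCHI_sem)
    also have "\<dots> = (list_decode c \<in> ?M)"
      using nk by (intro Mchi_local) simp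
    finally show "(eval MCHI (c # prefix_code p k # rest) \<noteq> 0) = (list_decode c \<in> ?M)" .
  qed
  have ex: "HS (PM ?M) \<inter> PM ?M \<noteq> {}"
  proof (cases "is_tree_name p")
    case True then show ?thesis using exist_sol chi_pclosed by blast
  next
    case False
    then obtain c where "viol p c" using not_tree_viol by blast
    then obtain x where "x \<in> body ?M" using viol_body by blast
    then show ?thesis using F1[of x ?M] by (auto simp: body_def)
  qed
  then have qd: "qname ?M \<in> pdom FindHS_Sigma01" by (simp add: FindHS_Sigma01_def open_qname)
  let ?f = "G (qname ?M)"
  have "psol FindHS_Sigma01 (qname ?M) ?f" using G qd unfolding realizes_def by blast
  then have f: "?f \<in> HS (PM ?M) \<inter> PM ?M" by (simp add: FindHS_Sigma01_def open_qname)
  have ps: "psol chi_Pi11 p (out2 ?f)"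
  proof (cases "even (?f 0)")
    case True
    have nb: "body ?M = {}" by (rule F3[OF f True])
    have tn: "is_tree_name p" using nb not_tree_viol viol_body by blast
    have "body (tree_of p) = {}" using nb tree_body_chi by blast
    then have "p \<in> WF_trees" using tn by (simp add: WF_trees_def)
    then show ?thesis using True by (simp add: chi_Pi11_def out2_def)
  next
    case False
    have "p \<notin> WF_trees"
    proof
      assume "p \<in> WF_trees"
      then have tn: "is_tree_name p" and nb: "body (tree_of p) = {}" by (auto simp: WF_trees_def)
      have "(\<lambda>n. nthc (?f (Suc n) div 2) n) \<in> body ?M"
        using F2[OF f _ chi_pclosed[OF tn]] False by simp
      then show False using chi_body_tree[OF tn] nb by blast
    qed
    then show ?thesis using False by (simp add: chi_Pi11_def out2_def)
  qed
  show "\<exists>q. assoc_val (\<lambda>x. eval (ALPHA MCHI) [x]) p q \<and> q \<in> pdom FindHS_Sigma01 \<and>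
          (\<exists>r. assoc_val (\<lambda>x. eval BETA2 [x]) (bpair p (G q)) r \<and> psol chi_Pi11 p r)"
    using av qd beta2_assoc ps by blast
qed

definition Gb :: "nat \<Rightarrow> baire" where "Gb b = (\<lambda>n. if n = 0 then b else 0)"

definition solset :: "baire \<Rightarrow> baire set" where
  "solset p = HS (open_named p) \<inter> open_named p"

lemma red_props:
  assumes R: "FindHS_Sigma01 \<le>\<^sub>W chi_Pi11"
  shows "\<exists>\<beta>. \<forall>p. solset p \<noteq> {} \<longrightarrow> (\<exists>b r. b \<le> 1 \<and> assoc_val \<beta> (bpair p (Gb b)) r \<and> r \<in> solset p)"
proof -
  obtain \<alpha> \<beta> where H: "\<forall>G. realizes G chi_Pi11 \<longrightarrow>
        (\<forall>p\<in>pdom FindHS_Sigma01. \<exists>q. assoc_val \<alpha> p q \<and> q \<in> pdom chi_Pi11 \<and>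
            (\<exists>r. assoc_val \<beta> (bpair p (G q)) r \<and> psol FindHS_Sigma01 p r))"
    using R unfolding weihrauch_le_def by blast
  define G0 where "G0 = (\<lambda>q. Gb (if q \<in> WF_trees then 1 else 0))"
  have "realizes G0 chi_Pi11" by (simp add: realizes_def chi_Pi11_def G0_def Gb_def)
  then have H0: "\<forall>p\<in>pdom FindHS_Sigma01. \<exists>q. assoc_val \<alpha> p q \<and>
            (\<exists>r. assoc_val \<beta> (bpair p (G0 q)) r \<and> psol FindHS_Sigma01 p r)" using H by blast
  show ?thesis
  proof (rule exI[of _ \<beta>], intro allI impI)
    fix p assume "solset p \<noteq> {}"
    then have "p \<in> pdom FindHS_Sigma01" by (simp add: FindHS_Sigma01_def solset_def)
    then obtain q r where "assoc_val \<beta> (bpair p (G0 q)) r" "psol FindHS_Sigma01 p r" using H0 by blast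
    then show "\<exists>b r. b \<le> 1 \<and> assoc_val \<beta> (bpair p (Gb b)) r \<and> r \<in> solset p"
      unfolding G0_def by (intro exI[of _ "if q \<in> WF_trees then 1 else 0"] exI[of _ r])
         (simp add: FindHS_Sigma01_def solset_def)
  qed
qed

lemma prefix_code_eq: "(\<And>i. i < k \<Longrightarrow> u' i = u i) \<Longrightarrow> prefix_code u' k = prefix_code u k"
proof -
  assume a: "\<And>i. i < k \<Longrightarrow> u' i = u i"
  have e: "map u' [0..<k] = map u [0..<k]" by (rule map_cong) (auto simp: a)
  show ?thesis unfolding prefix_code_def e by (rule refl)
qed

lemma cont0:
  assumes "assoc_val \<beta> u r"
  shows "\<exists>Kb. \<forall>u' r'. (\<forall>i<Kb. u' i = u i) \<longrightarrow> assoc_val \<beta> u' r' \<longrightarrow> r' 0 = r 0"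
proof -
  obtain k where k: "0 < assoc_out \<beta> u 0 k" "\<forall>j<k. assoc_out \<beta> u 0 j = 0" "r 0 = assoc_out \<beta> u 0 k - 1"
    using assms unfolding assoc_val_def by blast
  show ?thesis
  proof (rule exI[of _ k], intro allI impI)
    fix u' r' assume ag: "\<forall>i<k. u' i = u i" and a': "assoc_val \<beta> u' r'"
    have same: "j \<le> k \<Longrightarrow> assoc_out \<beta> u' 0 j = assoc_out \<beta> u 0 j" for j
      unfolding assoc_out_def using ag by (subst prefix_code_eq[of j u' u]) auto
    obtain k' where k': "0 < assoc_out \<beta> u' 0 k'" "\<forall>j<k'. assoc_out \<beta> u' 0 j = 0" "r' 0 = assoc_out \<beta> u' 0 k' - 1"
      using a' unfolding assoc_val_def by blast
    have "\<not> k' < k" using k' k same by (metis less_imp_le_nat less_not_refl)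
    moreover have "\<not> k < k'" using k' k same by (metis less_not_refl order_refl)
    ultimately have "k' = k" by simp
    then show "r' 0 = r 0" using k k' same by simp
  qed
qed

lemma bpair_agree: "(\<forall>i<Kb. p' i = p i) \<Longrightarrow> (\<forall>i<Kb. bpair p' g i = bpair p g i)"
  by (simp add: bpair_def)

definition ext :: "baire \<Rightarrow> nat \<Rightarrow> nat \<Rightarrow> baire" where
  "ext x N m = (\<lambda>i. if i < N then x i else if (\<exists>a b. list_decode i = [a, b] \<and> m \<le> a) then Suc i else 0)"

lemma ext_listed: "s \<in> listed_strings (ext x N m) \<longleftrightarrow>
   (\<exists>i<N. x i = Suc (list_encode s)) \<or> (N \<le> list_encode s \<and> (\<exists>a b. s = [a, b] \<and> m \<le> a))"
proof
  assume "s \<in> listed_strings (ext x N m)"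
  then obtain n where n: "ext x N m n = Suc (list_encode s)" by (auto simp: listed_strings_def)
  show "(\<exists>i<N. x i = Suc (list_encode s)) \<or> (N \<le> list_encode s \<and> (\<exists>a b. s = [a, b] \<and> m \<le> a))"
  proof (cases "n < N")
    case True then show ?thesis using n by (auto simp: ext_def)
  next
    case False
    then have "(\<exists>a b. list_decode n = [a, b] \<and> m \<le> a) \<and> n = list_encode s"
      using n by (auto simp: ext_def split: if_splits)
    then show ?thesis using False by auto
  qed
next
  assume "(\<exists>i<N. x i = Suc (list_encode s)) \<or> (N \<le> list_encode s \<and> (\<exists>a b. s = [a, b] \<and> m \<le> a))"
  then show "s \<in> listed_strings (ext x N m)"
  proof
    assume "\<exists>i<N. x i = Suc (list_encode s)"
    then obtain i where "i < N" "x i = Suc (list_encode s)" by blast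
    then show ?thesis unfolding listed_strings_def by (intro CollectI exI[of _ i]) (simp add: ext_def)
  next
    assume a: "N \<le> list_encode s \<and> (\<exists>a b. s = [a, b] \<and> m \<le> a)"
    then show ?thesis unfolding listed_strings_def
      by (intro CollectI exI[of _ "list_encode s"]) (auto simp: ext_def)
  qed
qed

definition pairs :: "baire \<Rightarrow> bool" where
  "pairs x \<longleftrightarrow> (\<forall>s\<in>listed_strings x. length s = 2)"

lemma pairs_ext: "pairs x \<Longrightarrow> pairs (ext x N m)"
  unfolding pairs_def using ext_listed[of _ x N m] by (auto simp: listed_strings_def)

lemma mem_open: "h \<in> open_named y \<longleftrightarrow> h \<in> ramsey \<and> (\<exists>s\<in>listed_strings y. map h [0..<length s] = s)"
  unfolding open_named_def cone_def by auto

lemma excl: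
  assumes TP: "\<forall>s\<in>listed_strings y. length s = 2 \<and> (s ! 0 < m \<longrightarrow> s ! 1 < m)"
    and f: "f \<in> solset y"
  shows "m \<le> f 0"
proof (rule ccontr)
  assume "\<not> m \<le> f 0"
  then have f0: "f 0 < m" by simp
  define g where "g = (\<lambda>n::nat. if n = 0 then 0 else m + n)"
  have "strict_mono g" unfolding strict_mono_def g_def by auto
  then have "f \<circ> g \<in> open_named y" using sol_all f by (simp add: solset_def ramsey_def)
  then obtain s where s: "s \<in> listed_strings y" "map (f \<circ> g) [0..<length s] = s" by (auto simp: mem_open)
  have l2: "length s = 2" using TP s(1) by blast
  have "s ! 0 = f 0" "s ! 1 = f (m + 1)" using map_eq_nth[OF s(2), of 0] map_eq_nth[OF s(2), of 1] l2
    by (simp_all add: g_def)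
  then have "f (m + 1) < m" using TP s(1) f0 by auto
  moreover have "m + 1 \<le> f (m + 1)" using f sm_ge by (simp add: solset_def HS_def homogeneous_def ramsey_def)
  ultimately show False by simp
qed

lemma ext_sol:
  assumes "N \<le> m"
  shows "(\<lambda>i. m + i) \<in> solset (ext x N m)"
  unfolding solset_def
proof (rule sol_intro)
  show "(\<lambda>i. m + i) \<in> ramsey" by (simp add: ramsey_def strict_mono_def)
  fix g assume g: "g \<in> ramsey"
  let ?s = "[m + g 0, m + g 1]"
  have "m + g 0 \<le> list_encode ?s" using elem_le_code[of 0 ?s] by simp
  then have l: "?s \<in> listed_strings (ext x N m)" using assms by (subst ext_listed) auto
  have e: "map ((\<lambda>i. m + i) \<circ> g) [0..<length ?s] = ?s" by (simp add: numeral_2_eq_2)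
  have r: "(\<lambda>i. m + i) \<circ> g \<in> ramsey" using g by (simp add: ramsey_def strict_mono_def)
  show "(\<lambda>i. m + i) \<circ> g \<in> open_named (ext x N m)"
    by (rule mem_open[THEN iffD2, OF conjI[OF r bexI[where P="\<lambda>s. map ((\<lambda>i. m + i) \<circ> g) [0..<length s] = s", OF e l]]])
qed

lemma ext_TP:
  assumes px: "pairs x" and small: "\<forall>i<N. x i < m"
  shows "\<forall>s\<in>listed_strings (ext x N m). length s = 2 \<and> (s ! 0 < m \<longrightarrow> s ! 1 < m)"
proof
  fix s assume s: "s \<in> listed_strings (ext x N m)"
  have l2: "length s = 2" using pairs_ext[OF px] s by (simp add: pairs_def)
  from s have "(\<exists>i<N. x i = Suc (list_encode s)) \<or> (N \<le> list_encode s \<and> (\<exists>a b. s = [a, b] \<and> m \<le> a))"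
    by (simp add: ext_listed)
  then show "length s = 2 \<and> (s ! 0 < m \<longrightarrow> s ! 1 < m)"
  proof
    assume "\<exists>i<N. x i = Suc (list_encode s)"
    then obtain i where "i < N" "x i = Suc (list_encode s)" by blast
    then have "list_encode s < m" using small by force
    then have "s ! 1 < m" using elem_le_code[of 1 s] l2 by simp
    then show ?thesis using l2 by simp
  qed (auto)
qed

lemma ext_agree: "\<forall>i<N. ext x N m i = x i" by (simp add: ext_def)

definition bigm :: "baire \<Rightarrow> nat \<Rightarrow> nat \<Rightarrow> nat" where
  "bigm x N c = N + (\<Sum>i<N. x i) + c + 1"

lemma bigm_props: "N \<le> bigm x N c" "\<forall>i<N. x i < bigm x N c" "c < bigm x N c"
proof -
  show "N \<le> bigm x N c" by (simp add: bigm_def)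
  show "c < bigm x N c" by (simp add: bigm_def)
  show "\<forall>i<N. x i < bigm x N c"
  proof (intro allI impI)
    fix i assume "i < N"
    then have "x i \<le> (\<Sum>i<N. x i)" by (intro member_le_sum) auto
    then show "x i < bigm x N c" by (simp add: bigm_def)
  qed
qed

theorem not_FindHS_le_chi: "\<not> FindHS_Sigma01 \<le>\<^sub>W chi_Pi11"
proof
  assume R: "FindHS_Sigma01 \<le>\<^sub>W chi_Pi11"
  obtain \<beta> where B: "\<forall>p. solset p \<noteq> {} \<longrightarrow> (\<exists>b r. b \<le> 1 \<and> assoc_val \<beta> (bpair p (Gb b)) r \<and> r \<in> solset p)"
    using red_props[OF R] by blast
  have B': "\<exists>b r. b \<le> 1 \<and> assoc_val \<beta> (bpair (ext x N m) (Gb b)) r \<and> r \<in> solset (ext x N m)"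
    if "N \<le> m" for x N m using B ext_sol[OF that, of x] by blast
  have cont: "r' 0 = r 0"
    if "assoc_val \<beta> (bpair p (Gb b)) r" "assoc_val \<beta> (bpair p' (Gb b)) r'" "\<forall>i<Kb. p' i = p i"
       "\<forall>u' r'. (\<forall>i<Kb. u' i = bpair p (Gb b) i) \<longrightarrow> assoc_val \<beta> u' r' \<longrightarrow> r' 0 = r 0"
    for p p' b r r' Kb
    using that bpair_agree[OF that(3)] by blast
  define x0 where "x0 = ext (\<lambda>_. 0) 0 0"
  have px0: "pairs x0" unfolding x0_def pairs_def using ext_listed[of _ "\<lambda>_. 0" 0 0] by auto
  obtain b0 r0 where b0: "b0 \<le> 1" "assoc_val \<beta> (bpair x0 (Gb b0)) r0" "r0 \<in> solset x0"
    using B'[of 0 0 "\<lambda>_. 0"] unfolding x0_def by auto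
  obtain K0 where K0: "\<forall>u' r'. (\<forall>i<K0. u' i = bpair x0 (Gb b0) i) \<longrightarrow> assoc_val \<beta> u' r' \<longrightarrow> r' 0 = r0 0"
    using cont0[OF b0(2)] by blast
  define m1 where "m1 = bigm x0 K0 (r0 0)"
  define x1 where "x1 = ext x0 K0 m1"
  have m1: "K0 \<le> m1" "\<forall>i<K0. x0 i < m1" "r0 0 < m1" using bigm_props unfolding m1_def by auto
  have px1: "pairs x1" unfolding x1_def by (rule pairs_ext[OF px0])
  obtain b1 r1 where b1: "b1 \<le> 1" "assoc_val \<beta> (bpair x1 (Gb b1)) r1" "r1 \<in> solset x1"
    using B'[OF m1(1), of x0] unfolding x1_def by auto
  have r1big: "m1 \<le> r1 0" using excl[OF ext_TP[OF px0 m1(2)] b1(3)[unfolded x1_def]] .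
  have ag10: "\<forall>i<K0. x1 i = x0 i" unfolding x1_def by (rule ext_agree)
  have "b1 \<noteq> b0"
  proof
    assume "b1 = b0"
    then have "r1 0 = r0 0" using cont[OF b0(2) _ ag10 K0] b1(2) by simp
    then show False using r1big m1(3) by simp
  qed
  obtain K1 where K1: "\<forall>u' r'. (\<forall>i<K1. u' i = bpair x1 (Gb b1) i) \<longrightarrow> assoc_val \<beta> u' r' \<longrightarrow> r' 0 = r1 0"
    using cont0[OF b1(2)] by blast
  define Kb where "Kb = max K0 K1"
  define m2 where "m2 = bigm x1 Kb (r0 0 + r1 0)"
  define x2 where "x2 = ext x1 Kb m2"
  have m2: "Kb \<le> m2" "\<forall>i<Kb. x1 i < m2" "r0 0 + r1 0 < m2" using bigm_props unfolding m2_def by auto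
  obtain b2 r2 where b2: "b2 \<le> 1" "assoc_val \<beta> (bpair x2 (Gb b2)) r2" "r2 \<in> solset x2"
    using B'[OF m2(1), of x1] unfolding x2_def by auto
  have r2big: "m2 \<le> r2 0" using excl[OF ext_TP[OF px1 m2(2)] b2(3)[unfolded x2_def]] .
  have ag2: "\<forall>i<Kb. x2 i = x1 i" unfolding x2_def by (rule ext_agree)
  have ag21: "\<forall>i<K1. x2 i = x1 i" using ag2 by (simp add: Kb_def)
  have ag20: "\<forall>i<K0. x2 i = x0 i" using ag2 ag10 by (simp add: Kb_def)
  have "b2 = b0 \<or> b2 = b1" using b0(1) b1(1) b2(1) \<open>b1 \<noteq> b0\<close> by linarith
  then show False
  proof
    assume "b2 = b0"
    then have "r2 0 = r0 0" using cont[OF b0(2) _ ag20 K0] b2(2) by simp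
    then show False using r2big m2(3) by simp
  next
    assume "b2 = b1"
    then have "r2 0 = r1 0" using cont[OF b1(2) _ ag21 K1] b2(2) by simp
    then show False using r2big m2(3) by simp
  qed
qed

theorem mainTheorem11:
  shows "sTC_Baire \<le>\<^sub>W FindHS_Sigma01 \<and> chi_Pi11 <\<^sub>W FindHS_Sigma01"
  using sTC_le chi_le not_FindHS_le_chi by (simp add: weihrauch_less_def)

end
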